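(* Let $(\Omega,\mathcal{F},P)$ be a complete probability space with a filtration $\mathbb{F}=(\mathcal{F}_t)_{t\ge0}$ satisfying the usual hypotheses, with $\mathcal{F}\supseteq\mathcal{F}_\infty:=\bigvee_{t\ge0}\mathcal{F}_t$, and let $\tau$ be a positive random variable. Let $\mathbb{G}=(\mathcal{G}_t)_{t\ge 0}$ be the progressive expansion of $\mathbb{F}$ by $\tau$ and $\mathbb{G}'=(\mathcal{G}'_t)_{t\ge0}$ the minimal expansion of $\mathbb{F}$ by $\tau$. Then the compensator of $\tau$ (i.e. of $N_t=1_{\{\tau\le t\}}$) under $\mathbb{G}$ and the compensator of $\tau$ under $\mathbb{G}'$ are identical.
   Context: The progressive expansion is $\mathcal{G}_t:=\{B\in\mathcal{G}_\infty:\exists B_t\in\mathcal{F}_t,\ B\cap\{t<\tau\}=B_t\cap\{t<\tau\}\}$ where $\mathcal{G}_\infty=\mathcal{F}_\infty\vee\sigma(\tau)$. The minimal expansion is $\mathcal{G}'_t:=\mathcal{F}_t\vee\sigma(\tau\wedge t)=\mathcal{F}_t\vee\sigma(\{\tau\le s\}: s\le t)$. The compensator of $\tau$ under a filtration $\mathbb{H}$ for which $\tau$ is a stopping time is the $\mathbb{H}$-predictable increasing process $\tilde N$ with $\tilde N_0=0$ such that $1_{\{\tau\le t\}}-\tilde N_t$ is an $\mathbb{H}$-martingale. *)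

theory Defs
  imports "HOL-Probability.Probability"
begin

definition filtration_on :: "'a measure \<Rightarrow> (real \<Rightarrow> 'a set set) \<Rightarrow> bool" where
  "filtration_on M F \<longleftrightarrow>
     (\<forall>t\<ge>0. sigma_algebra (space M) (F t) \<and> F t \<subseteq> sets M) \<and>
     (\<forall>s t. 0 \<le> s \<and> s \<le> t \<longrightarrow> F s \<subseteq> F t)"

definition usual_hypotheses :: "'a measure \<Rightarrow> (real \<Rightarrow> 'a set set) \<Rightarrow> bool" where
  "usual_hypotheses M F \<longleftrightarrow>
     (\<forall>t\<ge>0. F t = (\<Inter>u\<in>{t<..}. F u)) \<and> null_sets M \<subseteq> F 0"

definition F_infty :: "'a measure \<Rightarrow> (real \<Rightarrow> 'a set set) \<Rightarrow> 'a set set" where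
  "F_infty M F = sigma_sets (space M) (\<Union>t\<in>{0..}. F t)"

definition G_infty :: "'a measure \<Rightarrow> (real \<Rightarrow> 'a set set) \<Rightarrow> ('a \<Rightarrow> real) \<Rightarrow> 'a set set" where
  "G_infty M F \<tau> = sigma_sets (space M)
     (F_infty M F \<union> {{\<omega>\<in>space M. \<tau> \<omega> \<le> s} | s. True})"

definition prog_exp :: "'a measure \<Rightarrow> (real \<Rightarrow> 'a set set) \<Rightarrow> ('a \<Rightarrow> real) \<Rightarrow> real \<Rightarrow> 'a set set" where
  "prog_exp M F \<tau> t = {B \<in> G_infty M F \<tau>. \<exists>Bt\<in>F t.
      B \<inter> {\<omega>\<in>space M. t < \<tau> \<omega>} = Bt \<inter> {\<omega>\<in>space M. t < \<tau> \<omega>}}"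

definition min_exp :: "'a measure \<Rightarrow> (real \<Rightarrow> 'a set set) \<Rightarrow> ('a \<Rightarrow> real) \<Rightarrow> real \<Rightarrow> 'a set set" where
  "min_exp M F \<tau> t = sigma_sets (space M)
     (F t \<union> {{\<omega>\<in>space M. \<tau> \<omega> \<le> s} | s. s \<le> t})"

definition adapted :: "'a measure \<Rightarrow> (real \<Rightarrow> 'a set set) \<Rightarrow> (real \<Rightarrow> 'a \<Rightarrow> real) \<Rightarrow> bool" where
  "adapted M H X \<longleftrightarrow> (\<forall>t\<ge>0. \<forall>B\<in>sets borel. X t -` B \<inter> space M \<in> H t)"

definition martingale :: "'a measure \<Rightarrow> (real \<Rightarrow> 'a set set) \<Rightarrow> (real \<Rightarrow> 'a \<Rightarrow> real) \<Rightarrow> bool" where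
  "martingale M H X \<longleftrightarrow> adapted M H X \<and> (\<forall>t\<ge>0. integrable M (X t)) \<and>
     (\<forall>s t A. 0 \<le> s \<and> s \<le> t \<and> A \<in> H s \<longrightarrow>
        (LINT \<omega>:A|M. X t \<omega>) = (LINT \<omega>:A|M. X s \<omega>))"

definition predictable_sets :: "'a measure \<Rightarrow> (real \<Rightarrow> 'a set set) \<Rightarrow> ('a \<times> real) set set" where
  "predictable_sets M H = sigma_sets (space M \<times> {0..})
     ({A \<times> {0} | A. A \<in> H 0} \<union> {A \<times> {s<..t} | A s t. 0 \<le> s \<and> s < t \<and> A \<in> H s})"

definition predictable :: "'a measure \<Rightarrow> (real \<Rightarrow> 'a set set) \<Rightarrow> (real \<Rightarrow> 'a \<Rightarrow> real) \<Rightarrow> bool" where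
  "predictable M H X \<longleftrightarrow> (\<forall>B\<in>sets borel.
     {(\<omega>, t). \<omega> \<in> space M \<and> 0 \<le> t \<and> X t \<omega> \<in> B} \<in> predictable_sets M H)"

definition compensator :: "'a measure \<Rightarrow> (real \<Rightarrow> 'a set set) \<Rightarrow> ('a \<Rightarrow> real) \<Rightarrow> (real \<Rightarrow> 'a \<Rightarrow> real) \<Rightarrow> bool" where
  "compensator M H \<tau> A \<longleftrightarrow> predictable M H A \<and>
     (\<forall>\<omega>\<in>space M. A 0 \<omega> = 0 \<and> mono_on {0..} (\<lambda>t. A t \<omega>) \<and>
        (\<forall>t\<ge>0. continuous (at_right t) (\<lambda>s. A s \<omega>))) \<and>
     martingale M H (\<lambda>t \<omega>. indicator {\<omega>'. \<tau> \<omega>' \<le> t} \<omega> - A t \<omega>)"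

end

theory Submission
  imports Defs
begin

definition rho :: "(real \<Rightarrow> real) \<Rightarrow> real \<Rightarrow> real \<Rightarrow> real" where
  "rho f T u = (if u \<le> f T then Inf {s\<in>{0..T}. u \<le> f s} else T)"

lemma rho_props:
  fixes f :: "real \<Rightarrow> real"
  assumes mono: "mono_on {0..} f" and rc: "\<forall>t\<ge>0. continuous (at_right t) f"
    and T: "0 \<le> T" and uT: "u \<le> f T"
  shows "Inf {s\<in>{0..T}. u \<le> f s} \<in> {s\<in>{0..T}. u \<le> f s}"
proof -
  let ?S = "{s\<in>{0..T}. u \<le> f s}"
  define m where "m = Inf ?S"
  have ne: "?S \<noteq> {}" using T uT by auto
  have bdd: "bdd_below ?S" by (auto intro!: bdd_belowI[of _ 0])
  have m0: "0 \<le> m" unfolding m_def using ne by (auto intro!: cInf_greatest)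
  have mT: "m \<le> T" unfolding m_def using T uT bdd by (auto intro!: cInf_lower)
  have "u \<le> f m"
  proof (rule ccontr)
    assume "\<not> u \<le> f m"
    hence lt: "f m < u" by simp
    have "(f \<longlongrightarrow> f m) (at_right m)" using rc m0 by (simp add: continuous_within)
    hence "eventually (\<lambda>s. f s < u) (at_right m)" using lt by (rule order_tendstoD)
    then obtain b where d: "m < b" "\<And>s. m < s \<Longrightarrow> s < b \<Longrightarrow> f s < u"
      by (auto simp: eventually_at_right_field)
    then obtain s where s: "s \<in> ?S" "s < b" unfolding m_def using ne bdd
      by (meson cInf_lessD)
    have "m \<le> s" unfolding m_def using s bdd by (auto intro!: cInf_lower)
    show False
    proof (cases "s = m")
      case True then show ?thesis using s lt by auto
    next
      case False then show ?thesis using s d(2)[of s] \<open>m \<le> s\<close> by auto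
    qed
  qed
  thus ?thesis using m0 mT unfolding m_def by auto
qed

lemma rho_le_iff:
  fixes f :: "real \<Rightarrow> real"
  assumes mono: "mono_on {0..} f" and rc: "\<forall>t\<ge>0. continuous (at_right t) f"
    and f0: "f 0 = 0" and T: "0 \<le> T"
  shows "rho f T u \<le> t \<longleftrightarrow> (T \<le> t \<or> (0 \<le> t \<and> u \<le> f t))"
proof (cases "u \<le> f T")
  case True
  let ?S = "{s\<in>{0..T}. u \<le> f s}"
  have bdd: "bdd_below ?S" by (auto intro!: bdd_belowI[of _ 0])
  have mem: "Inf ?S \<in> ?S" by (rule rho_props[OF mono rc T True])
  have r: "rho f T u = Inf ?S" using True by (simp add: rho_def)
  show ?thesis
  proof
    assume "rho f T u \<le> t"
    hence "Inf ?S \<le> t" by (simp add: r)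
    thus "T \<le> t \<or> (0 \<le> t \<and> u \<le> f t)"
    proof (cases "T \<le> t")
      case False
      hence "u \<le> f (Inf ?S)" "f (Inf ?S) \<le> f t" "0 \<le> t" using mem \<open>Inf ?S \<le> t\<close>
        by (auto intro: mono_onD[OF mono])
      thus ?thesis by auto
    qed simp
  next
    assume "T \<le> t \<or> (0 \<le> t \<and> u \<le> f t)"
    thus "rho f T u \<le> t"
    proof
      assume "T \<le> t" thus ?thesis using mem r by auto
    next
      assume h: "0 \<le> t \<and> u \<le> f t"
      show ?thesis
      proof (cases "t \<le> T")
        case True
        hence "t \<in> ?S" using h by auto
        thus ?thesis using r bdd by (auto intro!: cInf_lower)
      next
        case False thus ?thesis using mem r by auto
      qed
    qed
  qed
next
  case False
  hence r: "rho f T u = T" by (simp add: rho_def)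
  have "\<not> (0 \<le> t \<and> t < T \<and> u \<le> f t)"
  proof
    assume "0 \<le> t \<and> t < T \<and> u \<le> f t"
    hence "f t \<le> f T" by (auto intro: mono_onD[OF mono])
    thus False using False \<open>0 \<le> t \<and> t < T \<and> u \<le> f t\<close> by auto
  qed
  thus ?thesis using r by auto
qed

lemma rho_nonneg:
  fixes f :: "real \<Rightarrow> real"
  assumes mono: "mono_on {0..} f" and rc: "\<forall>t\<ge>0. continuous (at_right t) f"
    and T: "0 \<le> T"
  shows "0 \<le> rho f T u"
proof (cases "u \<le> f T")
  case True thus ?thesis using rho_props[OF mono rc T True] by (simp add: rho_def)
qed (simp add: rho_def T)

lemma emeasure_band:
  fixes M :: "'a measure" and a b :: "'a \<Rightarrow> real"
  assumes [measurable]: "a \<in> borel_measurable M" "b \<in> borel_measurable M" "P \<in> sets M"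
    and ab: "\<And>\<omega>. \<omega> \<in> space M \<Longrightarrow> a \<omega> \<le> b \<omega>"
  shows "emeasure (M \<Otimes>\<^sub>M lborel) {x \<in> space (M \<Otimes>\<^sub>M lborel). fst x \<in> P \<and> a (fst x) < snd x \<and> snd x \<le> b (fst x)}
    = (\<integral>\<^sup>+\<omega>. indicator P \<omega> * ennreal (b \<omega> - a \<omega>) \<partial>M)"
proof -
  let ?S = "{x \<in> space (M \<Otimes>\<^sub>M lborel). fst x \<in> P \<and> a (fst x) < snd x \<and> snd x \<le> b (fst x)}"
  have S: "?S \<in> sets (M \<Otimes>\<^sub>M lborel)" by measurable
  have "emeasure (M \<Otimes>\<^sub>M lborel) ?S = (\<integral>\<^sup>+\<omega>. emeasure lborel (Pair \<omega> -` ?S) \<partial>M)"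
    by (rule lborel.emeasure_pair_measure_alt[OF S])
  also have "\<dots> = (\<integral>\<^sup>+\<omega>. indicator P \<omega> * ennreal (b \<omega> - a \<omega>) \<partial>M)"
  proof (rule nn_integral_cong)
    fix \<omega> assume w: "\<omega> \<in> space M"
    show "emeasure lborel (Pair \<omega> -` ?S) = indicator P \<omega> * ennreal (b \<omega> - a \<omega>)"
    proof (cases "\<omega> \<in> P")
      case True
      hence "Pair \<omega> -` ?S = {a \<omega><..b \<omega>}" using w by (auto simp: space_pair_measure)
      thus ?thesis using True ab[OF w] by simp
    next
      case False
      hence "Pair \<omega> -` ?S = {}" by auto
      thus ?thesis using False by simp
    qed
  qed
  finally show ?thesis .
qed

lemma integral_band:
  fixes M :: "'a measure" and a b c :: "'a \<Rightarrow> real"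
  assumes pM: "prob_space M"
    and [measurable]: "a \<in> borel_measurable M" "b \<in> borel_measurable M" "c \<in> borel_measurable M"
    and ia: "integrable M a" and ib: "integrable M b"
    and ab: "\<And>\<omega>. \<omega> \<in> space M \<Longrightarrow> a \<omega> \<le> b \<omega>"
    and cb: "\<And>\<omega>. \<omega> \<in> space M \<Longrightarrow> \<bar>c \<omega>\<bar> \<le> 1"
  shows "integrable (M \<Otimes>\<^sub>M lborel) (\<lambda>x. c (fst x) * indicator {x. a (fst x) < snd x \<and> snd x \<le> b (fst x)} x)"
    and "(\<integral>x. c (fst x) * indicator {x. a (fst x) < snd x \<and> snd x \<le> b (fst x)} x \<partial>(M \<Otimes>\<^sub>M lborel))
       = (\<integral>\<omega>. c \<omega> * (b \<omega> - a \<omega>) \<partial>M)"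
proof -
  interpret prob_space M by fact
  interpret P: pair_sigma_finite M lborel ..
  let ?S = "{x \<in> space (M \<Otimes>\<^sub>M lborel). fst x \<in> space M \<and> a (fst x) < snd x \<and> snd x \<le> b (fst x)}"
  let ?f = "\<lambda>x. c (fst x) * indicator {x. a (fst x) < snd x \<and> snd x \<le> b (fst x)} x"
  have S: "?S \<in> sets (M \<Otimes>\<^sub>M lborel)" by measurable
  have eqS: "\<And>x. x \<in> space (M \<Otimes>\<^sub>M lborel) \<Longrightarrow> indicator {x. a (fst x) < snd x \<and> snd x \<le> b (fst x)} x = (indicator ?S x :: real)"
    by (auto simp: space_pair_measure indicator_def)
  have fin: "emeasure (M \<Otimes>\<^sub>M lborel) ?S < \<infinity>"
  proof -
    have "emeasure (M \<Otimes>\<^sub>M lborel) ?S = (\<integral>\<^sup>+\<omega>. indicator (space M) \<omega> * ennreal (b \<omega> - a \<omega>) \<partial>M)"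
      by (rule emeasure_band) (auto simp: ab)
    also have "\<dots> = (\<integral>\<^sup>+\<omega>. ennreal (b \<omega> - a \<omega>) \<partial>M)"
      by (intro nn_integral_cong) auto
    also have "\<dots> = ennreal (\<integral>\<omega>. (b \<omega> - a \<omega>) \<partial>M)"
      using ia ib ab by (intro nn_integral_eq_integral) auto
    finally show ?thesis by simp
  qed
  have intS: "integrable (M \<Otimes>\<^sub>M lborel) (indicator ?S :: _ \<Rightarrow> real)"
    using S fin by (intro integrable_indicator_iff[THEN iffD2]) auto
  show int: "integrable (M \<Otimes>\<^sub>M lborel) ?f"
  proof (rule Bochner_Integration.integrable_bound[OF intS])
    show "?f \<in> borel_measurable (M \<Otimes>\<^sub>M lborel)" by measurable
    show "AE x in M \<Otimes>\<^sub>M lborel. norm (?f x) \<le> norm (indicator ?S x :: real)"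
      using cb eqS by (intro AE_I2) (auto simp: space_pair_measure indicator_def)
  qed
  have "integral\<^sup>L (M \<Otimes>\<^sub>M lborel) ?f = (\<integral>\<omega>. (\<integral>u. ?f (\<omega>, u) \<partial>lborel) \<partial>M)"
    using P.integral_fst'[OF int] by simp
  also have "\<dots> = (\<integral>\<omega>. c \<omega> * (b \<omega> - a \<omega>) \<partial>M)"
  proof (rule Bochner_Integration.integral_cong[OF refl])
    fix \<omega> assume w: "\<omega> \<in> space M"
    have "(\<integral>u. ?f (\<omega>, u) \<partial>lborel) = (\<integral>u. c \<omega> * indicator {a \<omega><..b \<omega>} u \<partial>lborel)"
      by (intro Bochner_Integration.integral_cong) (auto simp: indicator_def)
    also have "\<dots> = c \<omega> * (b \<omega> - a \<omega>)"
      using ab[OF w] by simp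
    finally show "(\<integral>u. ?f (\<omega>, u) \<partial>lborel) = c \<omega> * (b \<omega> - a \<omega>)" .
  qed
  finally show "integral\<^sup>L (M \<Otimes>\<^sub>M lborel) ?f = (\<integral>\<omega>. c \<omega> * (b \<omega> - a \<omega>) \<partial>M)" .
qed

definition gens :: "'a measure \<Rightarrow> (real \<Rightarrow> 'a set set) \<Rightarrow> ('a \<times> real) set set" where
  "gens M H = {A \<times> {0} | A. A \<in> H 0} \<union> {A \<times> {s<..t} | A s t. 0 \<le> s \<and> s < t \<and> A \<in> H s}"

definition PS :: "'a measure \<Rightarrow> (real \<Rightarrow> 'a set set) \<Rightarrow> ('a \<times> real) measure" where
  "PS M H = sigma (space M \<times> {0..}) (gens M H)"

definition good :: "'a measure \<Rightarrow> (real \<Rightarrow> 'a \<Rightarrow> real) \<Rightarrow> bool" where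
  "good M X \<longleftrightarrow> (\<forall>\<omega>\<in>space M. X 0 \<omega> = 0 \<and> mono_on {0..} (\<lambda>t. X t \<omega>) \<and>
        (\<forall>t\<ge>0. continuous (at_right t) (\<lambda>s. X s \<omega>))) \<and> (\<forall>t\<ge>0. integrable M (X t))"

definition psi :: "(real \<Rightarrow> 'a \<Rightarrow> real) \<Rightarrow> real \<Rightarrow> 'a \<times> real \<Rightarrow> 'a \<times> real" where
  "psi X T x = (fst x, rho (\<lambda>s. X s (fst x)) T (snd x))"

definition RR :: "'a measure \<Rightarrow> (real \<Rightarrow> 'a \<Rightarrow> real) \<Rightarrow> real \<Rightarrow> ('a \<times> real) set" where
  "RR M X T = {x \<in> space (M \<Otimes>\<^sub>M lborel). 0 < snd x \<and> snd x \<le> X T (fst x)}"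

definition nu :: "'a measure \<Rightarrow> (real \<Rightarrow> 'a set set) \<Rightarrow> (real \<Rightarrow> 'a \<Rightarrow> real) \<Rightarrow> real \<Rightarrow> ('a \<times> real) measure" where
  "nu M H X T = distr (density (M \<Otimes>\<^sub>M lborel) (indicator (RR M X T))) (PS M H) (psi X T)"

lemma goodD:
  assumes "good M X"
  shows "\<And>\<omega>. \<omega> \<in> space M \<Longrightarrow> X 0 \<omega> = 0"
    and "\<And>\<omega>. \<omega> \<in> space M \<Longrightarrow> mono_on {0..} (\<lambda>t. X t \<omega>)"
    and "\<And>\<omega>. \<omega> \<in> space M \<Longrightarrow> \<forall>t\<ge>0. continuous (at_right t) (\<lambda>s. X s \<omega>)"
    and "\<And>t. 0 \<le> t \<Longrightarrow> integrable M (X t)"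
    and "\<And>t. 0 \<le> t \<Longrightarrow> X t \<in> borel_measurable M"
  using assms unfolding good_def by auto

lemma good_mono:
  assumes "good M X" "\<omega> \<in> space M" "0 \<le> s" "s \<le> t"
  shows "X s \<omega> \<le> X t \<omega>"
  using goodD(2)[OF assms(1,2)] assms(3,4) by (auto intro: mono_onD)

lemma good_nonneg:
  assumes "good M X" "\<omega> \<in> space M" "0 \<le> t"
  shows "0 \<le> X t \<omega>"
  using good_mono[OF assms(1,2) order_refl assms(3)] goodD(1)[OF assms(1,2)] by simp

lemma good_rho_le:
  assumes "good M X" "\<omega> \<in> space M" "0 \<le> T"
  shows "rho (\<lambda>s. X s \<omega>) T u \<le> t \<longleftrightarrow> (T \<le> t \<or> (0 \<le> t \<and> u \<le> X t \<omega>))"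
  using rho_le_iff[OF goodD(2,3,1)[OF assms(1,2)] assms(3)] by simp

lemma good_rho_nonneg:
  assumes "good M X" "\<omega> \<in> space M" "0 \<le> T"
  shows "0 \<le> rho (\<lambda>s. X s \<omega>) T u"
  using rho_nonneg[OF goodD(2,3)[OF assms(1,2)] assms(3)] .

locale pfilt =
  fixes M :: "'a measure" and H :: "real \<Rightarrow> 'a set set"
  assumes prob: "prob_space M"
  and Hsub: "\<And>s. 0 \<le> s \<Longrightarrow> H s \<subseteq> sets M"
  and Hmono: "\<And>s t. 0 \<le> s \<Longrightarrow> s \<le> t \<Longrightarrow> H s \<subseteq> H t"
  and Hint: "\<And>s a b. 0 \<le> s \<Longrightarrow> a \<in> H s \<Longrightarrow> b \<in> H s \<Longrightarrow> a \<inter> b \<in> H s"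
  and Hspace: "\<And>s. 0 \<le> s \<Longrightarrow> space M \<in> H s"
  and Hempty: "{} \<in> H 0"
begin

lemma gens_Pow: "gens M H \<subseteq> Pow (space M \<times> {0..})"
proof -
  have "\<And>A s. 0 \<le> s \<Longrightarrow> A \<in> H s \<Longrightarrow> A \<subseteq> space M"
    using Hsub sets.sets_into_space by blast
  thus ?thesis unfolding gens_def by fastforce
qed

lemma sets_PS: "sets (PS M H) = predictable_sets M H"
  unfolding PS_def predictable_sets_def using gens_Pow
  by (simp add: sets_measure_of gens_def)

lemma space_PS: "space (PS M H) = space M \<times> {0..}"
  unfolding PS_def using gens_Pow by (simp add: space_measure_of_conv)

lemma psi_meas:
  assumes X: "good M X" and T: "0 < T"
  shows "psi X T \<in> measurable (M \<Otimes>\<^sub>M lborel) (PS M H)"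
  unfolding PS_def
proof (rule measurable_measure_of[OF gens_Pow])
  show "psi X T \<in> space (M \<Otimes>\<^sub>M lborel) \<rightarrow> space M \<times> {0..}"
    using good_rho_nonneg[OF X] T by (auto simp: psi_def space_pair_measure)
  fix G assume G: "G \<in> gens M H"
  show "psi X T -` G \<inter> space (M \<Otimes>\<^sub>M lborel) \<in> sets (M \<Otimes>\<^sub>M lborel)"
  proof (cases "\<exists>A. G = A \<times> {0} \<and> A \<in> H 0")
    case True
    then obtain A where A: "G = A \<times> {0}" "A \<in> H 0" by blast
    have [measurable]: "A \<in> sets M" using Hsub[of 0] A by auto
    have [measurable]: "X 0 \<in> borel_measurable M" using goodD(5)[OF X] by simp
    have eq: "psi X T x \<in> G \<longleftrightarrow> (fst x \<in> A \<and> (T \<le> 0 \<or> snd x \<le> X 0 (fst x)))"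
      if x: "x \<in> space (M \<Otimes>\<^sub>M lborel)" for x
    proof -
      have w: "fst x \<in> space M" using x by (auto simp: space_pair_measure)
      have "psi X T x \<in> G \<longleftrightarrow> fst x \<in> A \<and> rho (\<lambda>s. X s (fst x)) T (snd x) = 0"
        by (simp add: A(1) psi_def mem_Times_iff)
      also have "rho (\<lambda>s. X s (fst x)) T (snd x) = 0 \<longleftrightarrow> rho (\<lambda>s. X s (fst x)) T (snd x) \<le> 0"
        using good_rho_nonneg[OF X w less_imp_le[OF T], of "snd x"] by linarith
      also have "\<dots> \<longleftrightarrow> (T \<le> 0 \<or> snd x \<le> X 0 (fst x))"
        using good_rho_le[OF X w less_imp_le[OF T]] by simp
      finally show ?thesis .
    qed
    have "psi X T -` G \<inter> space (M \<Otimes>\<^sub>M lborel) =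
       {x \<in> space (M \<Otimes>\<^sub>M lborel). fst x \<in> A \<and> (T \<le> 0 \<or> snd x \<le> X 0 (fst x))}"
      using eq by blast
    also have "\<dots> \<in> sets (M \<Otimes>\<^sub>M lborel)" by measurable
    finally show ?thesis .
  next
    case False
    then obtain A s t where A: "G = A \<times> {s<..t}" "0 \<le> s" "s < t" "A \<in> H s"
      using G unfolding gens_def by blast
    have [measurable]: "A \<in> sets M" using Hsub[of s] A by auto
    have [measurable]: "X s \<in> borel_measurable M" "X t \<in> borel_measurable M"
      using goodD(5)[OF X] A by auto
    have eq: "psi X T x \<in> G \<longleftrightarrow> (fst x \<in> A \<and> \<not> (T \<le> s \<or> snd x \<le> X s (fst x))
          \<and> (T \<le> t \<or> snd x \<le> X t (fst x)))"
      if x: "x \<in> space (M \<Otimes>\<^sub>M lborel)" for x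
    proof -
      have w: "fst x \<in> space M" using x by (auto simp: space_pair_measure)
      have "psi X T x \<in> G \<longleftrightarrow> fst x \<in> A \<and> \<not> rho (\<lambda>s. X s (fst x)) T (snd x) \<le> s
           \<and> rho (\<lambda>s. X s (fst x)) T (snd x) \<le> t"
        by (auto simp add: A(1) psi_def mem_Times_iff)
      thus ?thesis using good_rho_le[OF X w less_imp_le[OF T]] A(2,3) by simp
    qed
    have "psi X T -` G \<inter> space (M \<Otimes>\<^sub>M lborel) =
       {x \<in> space (M \<Otimes>\<^sub>M lborel). fst x \<in> A \<and> \<not> (T \<le> s \<or> snd x \<le> X s (fst x))
          \<and> (T \<le> t \<or> snd x \<le> X t (fst x))}"
      using eq by blast
    also have "\<dots> \<in> sets (M \<Otimes>\<^sub>M lborel)" by measurable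
    finally show ?thesis .
  qed
qed

lemma RR_sets:
  assumes X: "good M X" and T: "0 \<le> T"
  shows "RR M X T \<in> sets (M \<Otimes>\<^sub>M lborel)"
proof -
  have [measurable]: "X T \<in> borel_measurable M" using goodD(5)[OF X T] .
  show ?thesis unfolding RR_def by measurable
qed

lemma emeasure_nu:
  assumes X: "good M X" and T: "0 < T" and G: "G \<in> sets (PS M H)"
  shows "emeasure (nu M H X T) G = emeasure (M \<Otimes>\<^sub>M lborel) (RR M X T \<inter> (psi X T -` G \<inter> space (M \<Otimes>\<^sub>M lborel)))"
proof -
  have m: "psi X T \<in> measurable (density (M \<Otimes>\<^sub>M lborel) (indicator (RR M X T))) (PS M H)"
    by (subst measurable_cong_sets[OF sets_density refl]) (rule psi_meas[OF X T])
  have "emeasure (nu M H X T) G = emeasure (density (M \<Otimes>\<^sub>M lborel) (indicator (RR M X T))) (psi X T -` G \<inter> space (M \<Otimes>\<^sub>M lborel))"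
    unfolding nu_def by (subst emeasure_distr[OF m G]) simp
  also have "\<dots> = emeasure (M \<Otimes>\<^sub>M lborel) (RR M X T \<inter> (psi X T -` G \<inter> space (M \<Otimes>\<^sub>M lborel)))"
    by (rule emeasure_restricted[OF RR_sets[OF X] measurable_sets[OF psi_meas[OF X T] G]]) (use T in simp)
  finally show ?thesis .
qed

end

context pfilt begin

lemma gensI0: "A \<in> H 0 \<Longrightarrow> A \<times> {0} \<in> gens M H"
  unfolding gens_def by blast

lemma gensI: "0 \<le> s \<Longrightarrow> s < t \<Longrightarrow> A \<in> H s \<Longrightarrow> A \<times> {s<..t} \<in> gens M H"
  unfolding gens_def by blast

lemma gen_in_PS:
  assumes "G \<in> gens M H" shows "G \<in> sets (PS M H)"
  using assms gens_Pow unfolding PS_def by (auto simp: sets_measure_of)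

lemma nu_gen0:
  assumes X: "good M X" and T: "0 < T" and A: "A \<in> H 0"
  shows "emeasure (nu M H X T) (A \<times> {0}) = 0"
proof -
  have G: "A \<times> {0} \<in> sets (PS M H)" using A by (intro gen_in_PS) (auto simp: gens_def)
  have "RR M X T \<inter> (psi X T -` (A \<times> {0}) \<inter> space (M \<Otimes>\<^sub>M lborel)) = {}"
  proof (rule ccontr)
    assume "RR M X T \<inter> (psi X T -` (A \<times> {0}) \<inter> space (M \<Otimes>\<^sub>M lborel)) \<noteq> {}"
    then obtain x where "x \<in> RR M X T \<inter> (psi X T -` (A \<times> {0}) \<inter> space (M \<Otimes>\<^sub>M lborel))" by blast
    hence x: "x \<in> RR M X T" "psi X T x \<in> A \<times> {0}" by simp_all
    have w: "fst x \<in> space M" using x(1) by (auto simp: RR_def space_pair_measure)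
    have "rho (\<lambda>s. X s (fst x)) T (snd x) \<le> 0" using x(2) by (simp add: psi_def)
    hence "T \<le> 0 \<or> snd x \<le> X 0 (fst x)" using good_rho_le[OF X w less_imp_le[OF T]] by simp
    thus False using x(1) T goodD(1)[OF X w] by (auto simp: RR_def)
  qed
  thus ?thesis by (simp add: emeasure_nu[OF X T G])
qed

lemma nu_gen:
  assumes X: "good M X" and T: "0 < T" and A: "A \<in> H s" and st: "0 \<le> s" "s < t"
  shows "emeasure (nu M H X T) (A \<times> {s<..t}) =
    (\<integral>\<^sup>+\<omega>. indicator A \<omega> * ennreal (X (min t T) \<omega> - X (min s T) \<omega>) \<partial>M)"
proof -
  have G: "A \<times> {s<..t} \<in> sets (PS M H)" using A st by (intro gen_in_PS) (auto simp: gens_def)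
  have [measurable]: "A \<in> sets M" using Hsub[OF st(1)] A by auto
  have [measurable]: "X (min s T) \<in> borel_measurable M" "X (min t T) \<in> borel_measurable M"
    using goodD(5)[OF X] st T by auto
  have eq: "RR M X T \<inter> (psi X T -` (A \<times> {s<..t}) \<inter> space (M \<Otimes>\<^sub>M lborel)) =
    {x \<in> space (M \<Otimes>\<^sub>M lborel). fst x \<in> A \<and> X (min s T) (fst x) < snd x \<and> snd x \<le> X (min t T) (fst x)}"
    (is "?L = ?R")
  proof (intro set_eqI iffI)
    fix x assume x: "x \<in> ?L"
    have w: "fst x \<in> space M" using x by (auto simp: RR_def space_pair_measure)
    have r: "\<not> rho (\<lambda>s. X s (fst x)) T (snd x) \<le> s" "rho (\<lambda>s. X s (fst x)) T (snd x) \<le> t"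
      using x by (auto simp: psi_def)
    hence c: "\<not> (T \<le> s \<or> snd x \<le> X s (fst x))" "T \<le> t \<or> snd x \<le> X t (fst x)"
      using good_rho_le[OF X w less_imp_le[OF T]] st by auto
    have "X (min s T) (fst x) < snd x" using c(1) by (simp add: min_def)
    moreover have "snd x \<le> X (min t T) (fst x)" using c(2) x by (auto simp: min_def RR_def)
    ultimately show "x \<in> ?R" using x by (auto simp: psi_def)
  next
    fix x assume x: "x \<in> ?R"
    have w: "fst x \<in> space M" using x by (auto simp: space_pair_measure)
    have sT: "s < T"
    proof (rule ccontr)
      assume "\<not> s < T" hence "min s T = T" "min t T = T" using st by auto
      thus False using x by auto
    qed
    have u1: "X s (fst x) < snd x" using x sT by (simp add: min_def)
    have u2: "snd x \<le> X (min t T) (fst x)" using x by simp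
    have pos: "0 < snd x" using u1 good_nonneg[OF X w st(1)] by linarith
    have leT: "snd x \<le> X T (fst x)"
      using u2 good_mono[OF X w, of "min t T" T] st T by auto
    have "\<not> (T \<le> s \<or> snd x \<le> X s (fst x))" "T \<le> t \<or> snd x \<le> X t (fst x)"
      using sT u1 u2 by (auto simp: min_def split: if_splits)
    hence "\<not> rho (\<lambda>s. X s (fst x)) T (snd x) \<le> s" "rho (\<lambda>s. X s (fst x)) T (snd x) \<le> t"
      using good_rho_le[OF X w less_imp_le[OF T]] st by auto
    thus "x \<in> ?L" using x pos leT by (auto simp: RR_def psi_def)
  qed
  show ?thesis
    unfolding emeasure_nu[OF X T G] eq
  proof (rule emeasure_band)
    show "X (min s T) \<omega> \<le> X (min t T) \<omega>" if "\<omega> \<in> space M" for \<omega>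
      using good_mono[OF X that, of "min s T" "min t T"] st T by auto
  qed measurable
qed

lemma nu_finite:
  assumes X: "good M X" and T: "0 < T"
  shows "emeasure (nu M H X T) G \<noteq> \<infinity>"
proof -
  interpret prob_space M by (rule prob)
  have sp: "space (nu M H X T) \<in> sets (PS M H)" by (simp add: nu_def)
  have [measurable]: "X T \<in> borel_measurable M" using goodD(5)[OF X] T by simp
  have "emeasure (nu M H X T) G \<le> emeasure (nu M H X T) (space (nu M H X T))"
    by (rule emeasure_space)
  also have "\<dots> = emeasure (M \<Otimes>\<^sub>M lborel) (RR M X T \<inter> (psi X T -` space (nu M H X T) \<inter> space (M \<Otimes>\<^sub>M lborel)))"
    by (rule emeasure_nu[OF X T sp])
  also have "\<dots> \<le> emeasure (M \<Otimes>\<^sub>M lborel) {x \<in> space (M \<Otimes>\<^sub>M lborel). fst x \<in> space M \<and> (\<lambda>_. 0) (fst x) < snd x \<and> snd x \<le> X T (fst x)}"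
    by (rule emeasure_mono) (auto simp: RR_def space_pair_measure)
  also have "\<dots> = (\<integral>\<^sup>+\<omega>. indicator (space M) \<omega> * ennreal (X T \<omega> - 0) \<partial>M)"
    by (rule emeasure_band) (auto intro: good_nonneg[OF X] simp: less_imp_le[OF T])
  also have "\<dots> = (\<integral>\<^sup>+\<omega>. ennreal (X T \<omega>) \<partial>M)"
    by (intro nn_integral_cong) auto
  also have "\<dots> = ennreal (\<integral>\<omega>. X T \<omega> \<partial>M)"
    using goodD(4)[OF X] T good_nonneg[OF X] by (intro nn_integral_eq_integral) auto
  also have "\<dots> < \<infinity>" by simp
  finally show ?thesis by simp
qed

lemma Int_stable_gens: "Int_stable (gens M H)"
proof (rule Int_stableI)
  fix a b assume a: "a \<in> gens M H" and b: "b \<in> gens M H"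
  have emp: "{} \<in> gens M H" using gensI0[OF Hempty] by simp
  show "a \<inter> b \<in> gens M H"
  proof (cases "\<exists>A. a = A \<times> {0} \<and> A \<in> H 0")
    case ca: True
    then obtain A where A: "a = A \<times> {0}" "A \<in> H 0" by blast
    show ?thesis
    proof (cases "\<exists>B. b = B \<times> {0} \<and> B \<in> H 0")
      case True
      then obtain B where B: "b = B \<times> {0}" "B \<in> H 0" by blast
      have "a \<inter> b = (A \<inter> B) \<times> {0}" using A B by auto
      thus ?thesis using Hint[of 0 A B] A B gensI0 by simp
    next
      case False
      then obtain B s t where B: "b = B \<times> {s<..t}" "0 \<le> s" using b unfolding gens_def by blast
      have "a \<inter> b = {}" using A B by auto
      thus ?thesis using emp by simp
    qed
  next
    case ca: False
    then obtain A s t where A: "a = A \<times> {s<..t}" "0 \<le> s" "s < t" "A \<in> H s"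
      using a unfolding gens_def by blast
    show ?thesis
    proof (cases "\<exists>B. b = B \<times> {0} \<and> B \<in> H 0")
      case True
      then obtain B where B: "b = B \<times> {0}" "B \<in> H 0" by blast
      have "a \<inter> b = {}" using A B by auto
      thus ?thesis using emp by simp
    next
      case False
      then obtain B s' t' where B: "b = B \<times> {s'<..t'}" "0 \<le> s'" "s' < t'" "B \<in> H s'"
        using b unfolding gens_def by blast
      show ?thesis
      proof (cases "max s s' < min t t'")
        case True
        have "A \<in> H (max s s')" using Hmono[of s "max s s'"] A by auto
        moreover have "B \<in> H (max s s')" using Hmono[of s' "max s s'"] B by auto
        ultimately have "A \<inter> B \<in> H (max s s')" using Hint[of "max s s'" A B] A by auto
        moreover have "a \<inter> b = (A \<inter> B) \<times> {max s s'<..min t t'}" using A B by auto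
        ultimately show ?thesis using True A B gensI[of "max s s'" "min t t'" "A \<inter> B"] by simp
      next
        case False
        have "a \<inter> b = {}" using A B False by auto
        thus ?thesis using emp by simp
      qed
    qed
  qed
qed

lemma nu_eq:
  assumes X: "good M X" and Y: "good M Y" and T: "0 < T"
    and mart: "\<And>s t B. 0 \<le> s \<Longrightarrow> s \<le> t \<Longrightarrow> B \<in> H s \<Longrightarrow>
      (\<integral>\<omega>. indicator B \<omega> * (X t \<omega> - X s \<omega>) \<partial>M) = (\<integral>\<omega>. indicator B \<omega> * (Y t \<omega> - Y s \<omega>) \<partial>M)"
  shows "nu M H X T = nu M H Y T"
proof -
  let ?\<Omega> = "space M \<times> {0::real..}"
  define C where "C i = (case i of 0 \<Rightarrow> space M \<times> {0} | Suc n \<Rightarrow> space M \<times> {real n<..real n + 1})" for i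
  have val: "emeasure (nu M H Z T) (A \<times> {s<..t}) = ennreal (\<integral>\<omega>. indicator A \<omega> * (Z (min t T) \<omega> - Z (min s T) \<omega>) \<partial>M)"
    if Z: "good M Z" and A: "A \<in> H s" and st: "0 \<le> s" "s < t" for Z A s t
  proof -
    have [measurable]: "A \<in> sets M" using Hsub[OF st(1)] A by auto
    have "emeasure (nu M H Z T) (A \<times> {s<..t}) = (\<integral>\<^sup>+\<omega>. ennreal (indicator A \<omega> * (Z (min t T) \<omega> - Z (min s T) \<omega>)) \<partial>M)"
      unfolding nu_gen[OF Z T A st]
      by (intro nn_integral_cong) (auto simp: indicator_def)
    also have "\<dots> = ennreal (\<integral>\<omega>. indicator A \<omega> * (Z (min t T) \<omega> - Z (min s T) \<omega>) \<partial>M)"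
    proof (rule nn_integral_eq_integral)
      show "integrable M (\<lambda>\<omega>. indicator A \<omega> * (Z (min t T) \<omega> - Z (min s T) \<omega>))"
        using integrable_mult_indicator[of A M "\<lambda>\<omega>. Z (min t T) \<omega> - Z (min s T) \<omega>"] goodD(4)[OF Z] st T
        by auto
      show "AE x in M. 0 \<le> indicator A x * (Z (min t T) x - Z (min s T) x)"
        using good_mono[OF Z] st T by (intro AE_I2) (auto simp: indicator_def)
    qed
    finally show ?thesis .
  qed
  show ?thesis
  proof (rule measure_eqI_generator_eq[OF Int_stable_gens gens_Pow, where A=C])
    show "sets (nu M H X T) = sigma_sets ?\<Omega> (gens M H)"
      using gens_Pow by (simp add: nu_def PS_def sets_measure_of)
    show "sets (nu M H Y T) = sigma_sets ?\<Omega> (gens M H)"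
      using gens_Pow by (simp add: nu_def PS_def sets_measure_of)
    show "emeasure (nu M H X T) (C i) \<noteq> \<infinity>" for i by (rule nu_finite[OF X T])
    show "range C \<subseteq> gens M H"
    proof (intro subsetI, elim rangeE)
      fix x i assume x: "x = C i"
      show "x \<in> gens M H"
      proof (cases i)
        case 0 thus ?thesis using x Hspace[of 0] gensI0 unfolding C_def by simp
      next
        case (Suc n)
        have "space M \<in> H (real n)" by (rule Hspace) simp
        thus ?thesis using x Suc gensI[of "real n" "real n + 1"] unfolding C_def by simp
      qed
    qed
    show "(\<Union>i. C i) = ?\<Omega>"
    proof (intro set_eqI iffI)
      fix x assume "x \<in> (\<Union>i. C i)"
      then obtain i where "x \<in> C i" by blast
      thus "x \<in> ?\<Omega>" by (cases i) (auto simp: C_def)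
    next
      fix x assume x: "x \<in> ?\<Omega>"
      show "x \<in> (\<Union>i. C i)"
      proof (cases "snd x = 0")
        case True thus ?thesis using x by (auto simp: C_def intro!: exI[of _ 0] mem_Times_iff[THEN iffD2])
      next
        case False
        hence p: "0 < snd x" using x by auto
        define n where "n = nat (\<lceil>snd x\<rceil> - 1)"
        have "real n < snd x" "snd x \<le> real n + 1" using p unfolding n_def
          by (auto simp: of_nat_nat) (linarith+)
        thus ?thesis using x by (auto simp: C_def intro!: exI[of _ "Suc n"] mem_Times_iff[THEN iffD2])
      qed
    qed
    fix G assume G: "G \<in> gens M H"
    show "emeasure (nu M H X T) G = emeasure (nu M H Y T) G"
    proof (cases "\<exists>A. G = A \<times> {0} \<and> A \<in> H 0")
      case True
      then obtain A where "G = A \<times> {0}" "A \<in> H 0" by blast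
      thus ?thesis using nu_gen0[OF X T] nu_gen0[OF Y T] by simp
    next
      case False
      then obtain A s t where A: "G = A \<times> {s<..t}" "0 \<le> s" "s < t" "A \<in> H s"
        using G unfolding gens_def by blast
      have "(\<integral>\<omega>. indicator A \<omega> * (X (min t T) \<omega> - X (min s T) \<omega>) \<partial>M) =
            (\<integral>\<omega>. indicator A \<omega> * (Y (min t T) \<omega> - Y (min s T) \<omega>) \<partial>M)"
      proof (cases "s < T")
        case True
        thus ?thesis using mart[of s "min t T" A] A by (simp add: min_def)
      next
        case False
        thus ?thesis using A by (simp add: min_def)
      qed
      thus ?thesis unfolding A(1) val[OF X A(4) A(2,3)] val[OF Y A(4) A(2,3)] by simp
    qed
  qed
qed

end

lemma rc_seq:
  fixes g :: "real \<Rightarrow> real"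
  assumes g: "continuous (at_right r) g" and a: "\<And>n. r \<le> a n" "\<And>n. a n < r + T / real (Suc n)"
  shows "(\<lambda>n. g (a n)) \<longlonglongrightarrow> g r"
proof (rule LIMSEQ_I)
  fix e :: real assume e: "0 < e"
  have "(g \<longlongrightarrow> g r) (at_right r)" using g by (simp add: continuous_within)
  hence "eventually (\<lambda>s. dist (g s) (g r) < e) (at_right r)" using e by (rule tendstoD)
  then obtain b where b: "r < b" "\<And>s. r < s \<Longrightarrow> s < b \<Longrightarrow> dist (g s) (g r) < e"
    by (auto simp: eventually_at_right_field)
  have "(\<lambda>n. T / real (Suc n)) \<longlonglongrightarrow> 0"
    using lim_const_over_n[of T] LIMSEQ_Suc by blast
  hence "eventually (\<lambda>n. T / real (Suc n) < b - r) sequentially"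
    using b(1) by (intro order_tendstoD) auto
  then obtain N where N: "\<And>n. N \<le> n \<Longrightarrow> T / real (Suc n) < b - r" by (auto simp: eventually_sequentially)
  show "\<exists>N. \<forall>n\<ge>N. norm (g (a n) - g r) < e"
  proof (intro exI allI impI)
    fix n assume "N \<le> n"
    hence lt: "a n < b" using N[of n] a(2)[of n] by linarith
    show "norm (g (a n) - g r) < e"
    proof (cases "a n = r")
      case True thus ?thesis using e by simp
    next
      case False
      hence "r < a n" using a(1)[of n] by simp
      thus ?thesis using b(2)[OF _ lt] by (simp add: dist_norm)
    qed
  qed
qed

definition tk :: "real \<Rightarrow> nat \<Rightarrow> nat \<Rightarrow> real" where
  "tk T n k = T * real k / real (Suc n)"

lemma tk_mono: "0 \<le> T \<Longrightarrow> k \<le> j \<Longrightarrow> tk T n k \<le> tk T n j"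
  unfolding tk_def by (intro divide_right_mono mult_left_mono) auto

lemma tk_nonneg: "0 \<le> T \<Longrightarrow> 0 \<le> tk T n k"
  unfolding tk_def by simp

lemma tk_last: "tk T n (Suc n) = T"
  unfolding tk_def by simp

lemma tk_pick:
  fixes T r :: real
  assumes T: "0 < T" and r: "0 < r" "r \<le> T"
  obtains k where "k \<in> {1..Suc n}" "tk T n (k - 1) < r" "r \<le> tk T n k"
proof -
  define N where "N = real (Suc n)"
  have N: "0 < N" by (simp add: N_def)
  define k where "k = nat \<lceil>r * N / T\<rceil>"
  have pos: "0 < r * N / T" using T r N by simp
  have c1: "1 \<le> \<lceil>r * N / T\<rceil>" using pos by (simp add: one_le_ceiling)
  have "r * N / T \<le> N" using r T N by (simp add: divide_le_eq)
  hence c2: "\<lceil>r * N / T\<rceil> \<le> Suc n" unfolding N_def by (simp add: ceiling_le_iff)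
  have kk: "real k = \<lceil>r * N / T\<rceil>" unfolding k_def using c1 by simp
  have "1 \<le> k" using c1 by (simp add: k_def le_nat_iff)
  moreover have "k \<le> Suc n" using c2 by (simp add: k_def nat_le_iff)
  ultimately have "k \<in> {1..Suc n}" by simp
  moreover have "r \<le> tk T n k"
  proof -
    have "r * N / T \<le> real k" using kk by (simp add: le_ceiling_iff)
    hence "r * N \<le> real k * T" using T by (simp add: divide_le_eq)
    thus ?thesis unfolding tk_def N_def[symmetric] using N by (simp add: le_divide_eq mult.commute)
  qed
  moreover have "tk T n (k - 1) < r"
  proof -
    have k1: "real (k - 1) = real k - 1" using \<open>k \<in> {1..Suc n}\<close> by auto
    have "real k - 1 < r * N / T" using kk by linarith
    hence "(real k - 1) * T < r * N" using T by (simp add: less_divide_eq)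
    thus ?thesis unfolding tk_def N_def[symmetric] k1 using N by (simp add: divide_less_eq mult.commute)
  qed
  ultimately show ?thesis using that by blast
qed

lemma tk_gap: "1 \<le> k \<Longrightarrow> tk T n k = tk T n (k - 1) + T / real (Suc n)"
proof -
  assume k: "1 \<le> k"
  have "real (k - 1) = real k - 1" using k by simp
  thus ?thesis unfolding tk_def by (simp add: diff_divide_distrib right_diff_distrib)
qed

context pfilt begin

lemma nu_integral:
  fixes f :: "'a \<times> real \<Rightarrow> real"
  assumes X: "good M X" and T: "0 < T" and f: "f \<in> borel_measurable (PS M H)"
  shows "integral\<^sup>L (nu M H X T) f = (\<integral>x. indicator (RR M X T) x * f (psi X T x) \<partial>(M \<Otimes>\<^sub>M lborel))"
proof -
  let ?D = "density (M \<Otimes>\<^sub>M lborel) (\<lambda>x. ennreal (indicator (RR M X T) x))"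
  have D: "density (M \<Otimes>\<^sub>M lborel) (indicator (RR M X T)) = ?D"
    by (simp add: ennreal_indicator)
  have m: "psi X T \<in> measurable ?D (PS M H)"
    by (subst measurable_cong_sets[OF sets_density refl]) (rule psi_meas[OF X T])
  have fm: "(\<lambda>x. f (psi X T x)) \<in> borel_measurable (M \<Otimes>\<^sub>M lborel)"
    using measurable_comp[OF psi_meas[OF X T] f] by (simp add: comp_def)
  have im: "indicator (RR M X T) \<in> borel_measurable (M \<Otimes>\<^sub>M lborel)"
    using RR_sets[OF X] T by (intro borel_measurable_indicator) simp
  have "integral\<^sup>L (nu M H X T) f = integral\<^sup>L ?D (\<lambda>x. f (psi X T x))"
    unfolding nu_def D by (rule integral_distr[OF m f])
  also have "\<dots> = (\<integral>x. indicator (RR M X T) x * f (psi X T x) \<partial>(M \<Otimes>\<^sub>M lborel))"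
    by (subst integral_density[OF fm im]) auto
  finally show ?thesis .
qed

end

lemma tk_le_T: "0 \<le> T \<Longrightarrow> k \<le> Suc n \<Longrightarrow> tk T n k \<le> T"
  using tk_mono[of T k "Suc n" n] tk_last[of T n] by simp

lemma tk_lt_T: "0 < T \<Longrightarrow> k < Suc n \<Longrightarrow> tk T n k < T"
  unfolding tk_def by (simp add: divide_less_eq)

context pfilt begin

lemma RR_finite:
  assumes X: "good M X" and T: "0 < T"
  shows "integrable (M \<Otimes>\<^sub>M lborel) (indicator (RR M X T) :: _ \<Rightarrow> real)"
proof -
  interpret prob_space M by (rule prob)
  have [measurable]: "X T \<in> borel_measurable M" using goodD(5)[OF X] T by simp
  have "RR M X T = {x \<in> space (M \<Otimes>\<^sub>M lborel). fst x \<in> space M \<and> (\<lambda>_. 0) (fst x) < snd x \<and> snd x \<le> X T (fst x)}"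
    by (auto simp: RR_def space_pair_measure)
  hence "emeasure (M \<Otimes>\<^sub>M lborel) (RR M X T) = (\<integral>\<^sup>+\<omega>. indicator (space M) \<omega> * ennreal (X T \<omega> - 0) \<partial>M)"
    by (simp only:) (rule emeasure_band, auto intro: good_nonneg[OF X] simp: less_imp_le[OF T])
  also have "\<dots> = (\<integral>\<^sup>+\<omega>. ennreal (X T \<omega>) \<partial>M)"
    by (intro nn_integral_cong) auto
  also have "\<dots> = ennreal (\<integral>\<omega>. X T \<omega> \<partial>M)"
    using goodD(4)[OF X] T good_nonneg[OF X] by (intro nn_integral_eq_integral) auto
  finally have "emeasure (M \<Otimes>\<^sub>M lborel) (RR M X T) < \<infinity>" by simp
  thus ?thesis using RR_sets[OF X] T by (intro integrable_indicator_iff[THEN iffD2]) auto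
qed

lemma riemann_limit:
  fixes c :: "real \<Rightarrow> 'a \<Rightarrow> real" and f :: "'a \<times> real \<Rightarrow> real"
  assumes X: "good M X" and T: "0 < T"
    and cm: "\<And>t. 0 \<le> t \<Longrightarrow> c t \<in> borel_measurable M"
    and cb: "\<And>t \<omega>. \<bar>c t \<omega>\<bar> \<le> 1"
    and crc: "\<And>\<omega> t. \<omega> \<in> space M \<Longrightarrow> 0 \<le> t \<Longrightarrow> continuous (at_right t) (\<lambda>s. c s \<omega>)"
    and f: "f \<in> borel_measurable (PS M H)"
    and fc: "\<And>\<omega> t. \<omega> \<in> space M \<Longrightarrow> 0 \<le> t \<Longrightarrow> f (\<omega>, t) = c t \<omega>"
  shows "(\<lambda>n. \<Sum>k\<in>{1..Suc n}. \<integral>\<omega>. c (tk T n k) \<omega> * (X (tk T n k) \<omega> - X (tk T n (k-1)) \<omega>) \<partial>M)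
           \<longlonglongrightarrow> integral\<^sup>L (nu M H X T) f"
proof -
  interpret prob_space M by (rule prob)
  define s where "s n x = (\<Sum>k\<in>{1..Suc n}. c (tk T n k) (fst x) *
      (if X (tk T n (k-1)) (fst x) < snd x \<and> snd x \<le> X (tk T n k) (fst x) then 1 else 0))" for n x
  define g where "g x = indicator (RR M X T) x * f (psi X T x)" for x
  let ?r = "\<lambda>x. rho (\<lambda>s. X s (fst x)) T (snd x)"
  have Xm: "\<And>t. 0 \<le> t \<Longrightarrow> X t \<in> borel_measurable M" using goodD(5)[OF X] .
  have cond_iff: "(X (tk T n (j-1)) (fst x) < snd x \<and> snd x \<le> X (tk T n j) (fst x)) \<longleftrightarrow>
      (tk T n (j-1) < ?r x \<and> ?r x \<le> tk T n j)"
    if x: "x \<in> RR M X T" and j: "1 \<le> j" "j \<le> Suc n" for x n j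
  proof -
    have w: "fst x \<in> space M" and u: "0 < snd x" "snd x \<le> X T (fst x)"
      using x by (auto simp: RR_def space_pair_measure)
    have le: "\<And>t. ?r x \<le> t \<longleftrightarrow> (T \<le> t \<or> (0 \<le> t \<and> snd x \<le> X t (fst x)))"
      using good_rho_le[OF X w less_imp_le[OF T]] .
    have a: "tk T n (j-1) < T" using tk_lt_T[OF T] j by simp
    have b: "tk T n j \<le> T" using tk_le_T[OF less_imp_le[OF T] j(2)] .
    have c: "0 \<le> tk T n (j-1)" "0 \<le> tk T n j" using tk_nonneg T by auto
    show ?thesis
    proof (cases "tk T n j = T")
      case True thus ?thesis using le[of "tk T n (j-1)"] le[of "tk T n j"] a c u by auto
    next
      case False thus ?thesis using le[of "tk T n (j-1)"] le[of "tk T n j"] a b c by auto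
    qed
  qed
  have in_RR: "\<exists>k\<in>{1..Suc n}. tk T n (k-1) < ?r x \<and> ?r x \<le> tk T n k \<and> s n x = c (tk T n k) (fst x)"
    if x: "x \<in> RR M X T" for x n
  proof -
    have w: "fst x \<in> space M" and u: "0 < snd x" "snd x \<le> X T (fst x)"
      using x by (auto simp: RR_def space_pair_measure)
    have le: "\<And>t. ?r x \<le> t \<longleftrightarrow> (T \<le> t \<or> (0 \<le> t \<and> snd x \<le> X t (fst x)))"
      using good_rho_le[OF X w less_imp_le[OF T]] .
    have r0: "0 < ?r x" using le[of 0] T u goodD(1)[OF X w] by auto
    have rT: "?r x \<le> T" using le[of T] by simp
    obtain k where k: "k \<in> {1..Suc n}" "tk T n (k - 1) < ?r x" "?r x \<le> tk T n k"
      using tk_pick[OF T r0 rT] by blast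
    have "s n x = (\<Sum>j\<in>{1..Suc n}. if j = k then c (tk T n k) (fst x) else 0)"
      unfolding s_def
    proof (rule sum.cong[OF refl])
      fix j assume j: "j \<in> {1..Suc n}"
      have ci: "(X (tk T n (j-1)) (fst x) < snd x \<and> snd x \<le> X (tk T n j) (fst x)) \<longleftrightarrow>
          (tk T n (j-1) < ?r x \<and> ?r x \<le> tk T n j)" using cond_iff[OF x] j by auto
      show "c (tk T n j) (fst x) * (if X (tk T n (j-1)) (fst x) < snd x \<and> snd x \<le> X (tk T n j) (fst x) then 1 else 0)
          = (if j = k then c (tk T n k) (fst x) else 0)"
      proof (cases "j = k")
        case True thus ?thesis using ci k by simp
      next
        case False
        have "\<not> (tk T n (j-1) < ?r x \<and> ?r x \<le> tk T n j)"
        proof (cases "j < k")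
          case True
          hence "tk T n j \<le> tk T n (k-1)" using tk_mono[of T j "k-1" n] T by simp
          thus ?thesis using k by auto
        next
          case False
          hence "k \<le> j - 1" using \<open>j \<noteq> k\<close> by simp
          hence "tk T n k \<le> tk T n (j-1)" using tk_mono[of T k "j-1" n] T by simp
          thus ?thesis using k by auto
        qed
        thus ?thesis using ci False by auto
      qed
    qed
    also have "\<dots> = c (tk T n k) (fst x)" using k(1) by (simp add: sum.delta)
    finally show ?thesis using k by blast
  qed
  have out_RR: "s n x = 0" if x: "x \<in> space (M \<Otimes>\<^sub>M lborel)" "x \<notin> RR M X T" for x n
  proof -
    have w: "fst x \<in> space M" using x by (auto simp: space_pair_measure)
    have "\<not> (X (tk T n (j-1)) (fst x) < snd x \<and> snd x \<le> X (tk T n j) (fst x))" if j: "j \<le> Suc n" for j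
    proof
      assume h: "X (tk T n (j-1)) (fst x) < snd x \<and> snd x \<le> X (tk T n j) (fst x)"
      have "0 \<le> X (tk T n (j-1)) (fst x)" using good_nonneg[OF X w tk_nonneg] T by simp
      moreover have "X (tk T n j) (fst x) \<le> X T (fst x)"
        using good_mono[OF X w tk_nonneg tk_le_T[OF _ j]] T by simp
      ultimately show False using h x by (auto simp: RR_def)
    qed
    thus ?thesis unfolding s_def by (intro sum.neutral) auto
  qed
  have sm: "s n \<in> borel_measurable (M \<Otimes>\<^sub>M lborel)" for n
  proof -
    have [measurable]: "c (tk T n k) \<in> borel_measurable M" "X (tk T n k) \<in> borel_measurable M" for k
      using cm Xm tk_nonneg T by auto
    show ?thesis unfolding s_def by measurable
  qed
  have gm: "g \<in> borel_measurable (M \<Otimes>\<^sub>M lborel)"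
  proof -
    have "(\<lambda>x. f (psi X T x)) \<in> borel_measurable (M \<Otimes>\<^sub>M lborel)"
      using measurable_comp[OF psi_meas[OF X T] f] by (simp add: comp_def)
    moreover have "indicator (RR M X T) \<in> borel_measurable (M \<Otimes>\<^sub>M lborel)"
      using RR_sets[OF X] T by (intro borel_measurable_indicator) simp
    ultimately show ?thesis unfolding g_def by (intro borel_measurable_times)
  qed
  have lim: "(\<lambda>n. integral\<^sup>L (M \<Otimes>\<^sub>M lborel) (s n)) \<longlonglongrightarrow> integral\<^sup>L (M \<Otimes>\<^sub>M lborel) g"
  proof (rule integral_dominated_convergence[OF gm sm RR_finite[OF X T]])
    show "AE x in M \<Otimes>\<^sub>M (lborel::real measure). norm (s n x) \<le> indicator (RR M X T) x" for n
    proof (rule AE_I2)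
      fix x :: "'a \<times> real" assume x: "x \<in> space (M \<Otimes>\<^sub>M lborel)"
      show "norm (s n x) \<le> indicator (RR M X T) x"
      proof (cases "x \<in> RR M X T")
        case True thus ?thesis using in_RR[OF True, of n] cb by auto
      next
        case False thus ?thesis using out_RR[OF x False] by simp
      qed
    qed
    show "AE x in M \<Otimes>\<^sub>M (lborel::real measure). (\<lambda>n. s n x) \<longlonglongrightarrow> g x"
    proof (rule AE_I2)
      fix x :: "'a \<times> real" assume x: "x \<in> space (M \<Otimes>\<^sub>M lborel)"
      show "(\<lambda>n. s n x) \<longlonglongrightarrow> g x"
      proof (cases "x \<in> RR M X T")
        case False thus ?thesis using out_RR[OF x False] by (simp add: g_def)
      next
        case True
        have w: "fst x \<in> space M" using x by (auto simp: space_pair_measure)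
        have r0: "0 \<le> ?r x" using good_rho_nonneg[OF X w less_imp_le[OF T]] .
        define a where "a n = tk T n (SOME k. k \<in> {1..Suc n} \<and> tk T n (k-1) < ?r x \<and> ?r x \<le> tk T n k \<and> s n x = c (tk T n k) (fst x))" for n
        have ak: "\<exists>k. k \<in> {1..Suc n} \<and> tk T n (k-1) < ?r x \<and> a n = tk T n k \<and> ?r x \<le> tk T n k \<and> s n x = c (tk T n k) (fst x)" for n
          unfolding a_def using someI_ex[OF in_RR[OF True, of n, unfolded Bex_def]] by blast
        have sa: "s n x = c (a n) (fst x)" for n using ak[of n] by auto
        have a1: "?r x \<le> a n" for n using ak[of n] by auto
        have a2: "a n < ?r x + T / real (Suc n)" for n
          using ak[of n] tk_gap[of _ T n] by auto
        have "(\<lambda>n. c (a n) (fst x)) \<longlonglongrightarrow> c (?r x) (fst x)"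
          by (rule rc_seq[where g="\<lambda>s. c s (fst x)", OF crc[OF w r0] a1 a2])
        moreover have "g x = c (?r x) (fst x)"
          using True fc[OF w r0] by (simp add: g_def psi_def)
        ultimately show ?thesis by (simp add: sa)
      qed
    qed
  qed
  have ints: "integral\<^sup>L (M \<Otimes>\<^sub>M lborel) (s n) =
      (\<Sum>k\<in>{1..Suc n}. \<integral>\<omega>. c (tk T n k) \<omega> * (X (tk T n k) \<omega> - X (tk T n (k-1)) \<omega>) \<partial>M)" for n
  proof -
    have band: "integrable (M \<Otimes>\<^sub>M lborel) (\<lambda>x. c (tk T n k) (fst x) * indicator {x. X (tk T n (k-1)) (fst x) < snd x \<and> snd x \<le> X (tk T n k) (fst x)} x)
      \<and> (\<integral>x. c (tk T n k) (fst x) * indicator {x. X (tk T n (k-1)) (fst x) < snd x \<and> snd x \<le> X (tk T n k) (fst x)} x \<partial>(M \<Otimes>\<^sub>M lborel))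
       = (\<integral>\<omega>. c (tk T n k) \<omega> * (X (tk T n k) \<omega> - X (tk T n (k-1)) \<omega>) \<partial>M)" if k: "k \<in> {1..Suc n}" for k
      using integral_band[OF prob Xm Xm cm goodD(4)[OF X] goodD(4)[OF X], of "tk T n (k-1)" "tk T n k" "tk T n k"]
        tk_nonneg[of T] T good_mono[OF X _ tk_nonneg tk_mono] cb by auto
    have eq: "s n = (\<lambda>x. \<Sum>k\<in>{1..Suc n}. c (tk T n k) (fst x) * indicator {x. X (tk T n (k-1)) (fst x) < snd x \<and> snd x \<le> X (tk T n k) (fst x)} x)"
      unfolding s_def by (intro ext sum.cong refl) (simp add: indicator_def)
    show ?thesis unfolding eq
      by (subst Bochner_Integration.integral_sum) (use band in \<open>auto intro!: sum.cong\<close>)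
  qed
  show ?thesis using lim unfolding ints nu_integral[OF X T f] g_def .
qed

end

definition phi :: "real \<Rightarrow> real" where "phi x = max (-1) (min 1 x)"
definition Phi :: "real \<Rightarrow> real" where "Phi x = (if \<bar>x\<bar> \<le> 1 then x^2/2 else \<bar>x\<bar> - 1/2)"

lemma Phi_lin: "x - 1/2 \<le> Phi x" "- x - 1/2 \<le> Phi x"
proof -
  have "0 \<le> (x - 1)^2" "0 \<le> (x + 1)^2" by simp_all
  thus "x - 1/2 \<le> Phi x" "- x - 1/2 \<le> Phi x" unfolding Phi_def by (auto simp: power2_eq_square algebra_simps)
qed

lemma Phi_quad:
  assumes y: "\<bar>y\<bar> \<le> 1" shows "x * y - y^2/2 \<le> Phi x"
proof (cases "\<bar>x\<bar> \<le> 1")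
  case True
  have "0 \<le> (x - y)^2" by simp
  thus ?thesis using True unfolding Phi_def by (simp add: power2_eq_square algebra_simps)
next
  case False
  have xy: "x * y \<le> \<bar>x\<bar> * \<bar>y\<bar>" by (metis abs_ge_self abs_mult)
  have "0 \<le> (1 - \<bar>y\<bar>) * (\<bar>x\<bar> - (1 + \<bar>y\<bar>)/2)" using y False by (intro mult_nonneg_nonneg) auto
  moreover have "(1 - \<bar>y\<bar>) * (\<bar>x\<bar> - (1 + \<bar>y\<bar>)/2) = \<bar>x\<bar> - \<bar>x\<bar>*\<bar>y\<bar> - 1/2 + (\<bar>y\<bar>*\<bar>y\<bar>)/2"
    by (simp add: algebra_simps add_divide_distrib diff_divide_distrib)
  moreover have "\<bar>y\<bar>*\<bar>y\<bar> = y^2" by (simp add: power2_eq_square)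
  ultimately have "\<bar>x\<bar> * \<bar>y\<bar> - y^2/2 \<le> \<bar>x\<bar> - 1/2" by linarith
  thus ?thesis using False xy unfolding Phi_def by simp
qed

lemma Phi_ineq: "Phi y - Phi x \<le> phi y * (y - x)"
proof (cases "\<bar>y\<bar> \<le> 1")
  case True
  hence "phi y = y" "Phi y = y^2/2" unfolding phi_def Phi_def by auto
  thus ?thesis using Phi_quad[OF True, of x] by (simp add: algebra_simps power2_eq_square)
next
  case False
  show ?thesis
  proof (cases "y > 1")
    case True
    hence "phi y = 1" "Phi y = y - 1/2" unfolding phi_def Phi_def by auto
    thus ?thesis using Phi_lin(1)[of x] by simp
  next
    case False
    hence "y < -1" using \<open>\<not> \<bar>y\<bar> \<le> 1\<close> by auto
    hence "phi y = -1" "Phi y = - y - 1/2" unfolding phi_def Phi_def by auto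
    thus ?thesis using Phi_lin(2)[of x] by simp
  qed
qed

lemma Phi_nonneg: "0 \<le> Phi x" unfolding Phi_def by auto
lemma Phi_zero: "Phi x = 0 \<Longrightarrow> x = 0" unfolding Phi_def by (auto split: if_splits)
lemma Phi_le_abs: "Phi x \<le> \<bar>x\<bar>"
proof (cases "\<bar>x\<bar> \<le> 1")
  case True
  have "x^2 = \<bar>x\<bar> * \<bar>x\<bar>" by (simp add: power2_eq_square)
  moreover have "\<bar>x\<bar> * \<bar>x\<bar> \<le> \<bar>x\<bar> * 1" using True by (intro mult_left_mono) auto
  ultimately show ?thesis using True unfolding Phi_def by simp
qed (simp add: Phi_def)

lemma tele: "(\<Sum>k\<in>{1..Suc n}. g k - g (k-1)) = g (Suc n) - (g 0 :: real)"
  by (induct n) auto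

context pfilt begin

lemma pred_meas:
  assumes "predictable M H X"
  shows "(\<lambda>x. X (snd x) (fst x)) \<in> borel_measurable (PS M H)"
proof (rule measurableI)
  fix A :: "real set" assume A: "A \<in> sets borel"
  have "(\<lambda>x. X (snd x) (fst x)) -` A \<inter> space (PS M H) = {(\<omega>, t). \<omega> \<in> space M \<and> 0 \<le> t \<and> X t \<omega> \<in> A}"
    by (auto simp: space_PS)
  also have "\<dots> \<in> sets (PS M H)" using assms A unfolding predictable_def sets_PS by blast
  finally show "(\<lambda>x. X (snd x) (fst x)) -` A \<inter> space (PS M H) \<in> sets (PS M H)" .
qed simp

lemma uniq:
  assumes X: "good M X" and Y: "good M Y" and T: "0 < T"
    and nueq: "nu M H X T = nu M H Y T"
    and pX: "predictable M H X" and pY: "predictable M H Y"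
  shows "AE \<omega> in M. X T \<omega> = Y T \<omega>"
proof -
  interpret prob_space M by (rule prob)
  define c where "c t \<omega> = phi (X t \<omega> - Y t \<omega>)" for t \<omega>
  define f where "f x = phi (X (snd x) (fst x) - Y (snd x) (fst x))" for x
  have [measurable]: "(\<lambda>x. X (snd x) (fst x)) \<in> borel_measurable (PS M H)"
     "(\<lambda>x. Y (snd x) (fst x)) \<in> borel_measurable (PS M H)"
    using pred_meas[OF pX] pred_meas[OF pY] .
  have fm: "f \<in> borel_measurable (PS M H)" unfolding f_def phi_def by measurable
  have Xm: "\<And>t. 0 \<le> t \<Longrightarrow> X t \<in> borel_measurable M" using goodD(5)[OF X] .
  have Ym: "\<And>t. 0 \<le> t \<Longrightarrow> Y t \<in> borel_measurable M" using goodD(5)[OF Y] .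
  have cm: "c t \<in> borel_measurable M" if "0 \<le> t" for t
  proof -
    have [measurable]: "X t \<in> borel_measurable M" "Y t \<in> borel_measurable M" using Xm Ym that by auto
    show ?thesis unfolding c_def phi_def by measurable
  qed
  have cb: "\<bar>c t \<omega>\<bar> \<le> 1" for t \<omega> unfolding c_def phi_def by auto
  have crc: "continuous (at_right t) (\<lambda>s. c s \<omega>)" if "\<omega> \<in> space M" "0 \<le> t" for \<omega> t
  proof -
    have "continuous (at_right t) (\<lambda>s. X s \<omega>)" "continuous (at_right t) (\<lambda>s. Y s \<omega>)"
      using goodD(3)[OF X] goodD(3)[OF Y] that by auto
    thus ?thesis unfolding c_def phi_def by (intro continuous_intros)
  qed
  have fc: "f (\<omega>, t) = c t \<omega>" for \<omega> t by (simp add: f_def c_def)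
  note LX = riemann_limit[OF X T cm cb crc fm fc]
  note LY = riemann_limit[OF Y T cm cb crc fm fc]
  define a where "a n = (\<Sum>k\<in>{1..Suc n}. \<integral>\<omega>. c (tk T n k) \<omega> * (X (tk T n k) \<omega> - X (tk T n (k-1)) \<omega>) \<partial>M)" for n
  define b where "b n = (\<Sum>k\<in>{1..Suc n}. \<integral>\<omega>. c (tk T n k) \<omega> * (Y (tk T n k) \<omega> - Y (tk T n (k-1)) \<omega>) \<partial>M)" for n
  have lim0: "(\<lambda>n. a n - b n) \<longlonglongrightarrow> 0"
    using tendsto_diff[OF LX LY] unfolding nueq a_def b_def by simp
  let ?P = "\<lambda>\<omega>. Phi (X T \<omega> - Y T \<omega>)"
  have [measurable]: "X T \<in> borel_measurable M" "Y T \<in> borel_measurable M" using Xm Ym T by auto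
  have Pint: "integrable M ?P"
  proof (rule Bochner_Integration.integrable_bound)
    show "integrable M (\<lambda>\<omega>. X T \<omega> - Y T \<omega>)" using goodD(4)[OF X] goodD(4)[OF Y] T by auto
    show "?P \<in> borel_measurable M" unfolding Phi_def by measurable
    show "AE x in M. norm (?P x) \<le> norm (X T x - Y T x)"
      using Phi_le_abs Phi_nonneg by (intro AE_I2) auto
  qed
  have bound: "(\<integral>\<omega>. ?P \<omega> \<partial>M) \<le> a n - b n" for n
  proof -
    define u where "u k \<omega> = c (tk T n k) \<omega> * (X (tk T n k) \<omega> - X (tk T n (k-1)) \<omega>)" for k \<omega>
    define v where "v k \<omega> = c (tk T n k) \<omega> * (Y (tk T n k) \<omega> - Y (tk T n (k-1)) \<omega>)" for k \<omega>
    have iu: "integrable M (u k)" "integrable M (v k)" for k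
    proof -
      have [measurable]: "c (tk T n k) \<in> borel_measurable M" using cm tk_nonneg T by auto
      show "integrable M (u k)" unfolding u_def
        by (rule Bochner_Integration.integrable_bound[of _ "\<lambda>\<omega>. X (tk T n k) \<omega> - X (tk T n (k-1)) \<omega>"])
           (use goodD(4)[OF X] goodD(5)[OF X] tk_nonneg[of T] T cb in \<open>auto intro!: AE_I2 simp: abs_mult intro: mult_left_le_one_le\<close>)
      show "integrable M (v k)" unfolding v_def
        by (rule Bochner_Integration.integrable_bound[of _ "\<lambda>\<omega>. Y (tk T n k) \<omega> - Y (tk T n (k-1)) \<omega>"])
           (use goodD(4)[OF Y] goodD(5)[OF Y] tk_nonneg[of T] T cb in \<open>auto intro!: AE_I2 simp: abs_mult intro: mult_left_le_one_le\<close>)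
    qed
    have "a n - b n = (\<Sum>k\<in>{1..Suc n}. (\<integral>\<omega>. u k \<omega> \<partial>M) - (\<integral>\<omega>. v k \<omega> \<partial>M))"
      unfolding a_def b_def u_def v_def by (simp add: sum_subtractf)
    also have "\<dots> = (\<Sum>k\<in>{1..Suc n}. \<integral>\<omega>. u k \<omega> - v k \<omega> \<partial>M)"
      using iu by (simp add: Bochner_Integration.integral_diff)
    also have "\<dots> = (\<integral>\<omega>. (\<Sum>k\<in>{1..Suc n}. u k \<omega> - v k \<omega>) \<partial>M)"
      using iu by (subst Bochner_Integration.integral_sum) auto
    finally have ab: "a n - b n = (\<integral>\<omega>. (\<Sum>k\<in>{1..Suc n}. u k \<omega> - v k \<omega>) \<partial>M)" .
    have "(\<integral>\<omega>. ?P \<omega> \<partial>M) \<le> (\<integral>\<omega>. (\<Sum>k\<in>{1..Suc n}. u k \<omega> - v k \<omega>) \<partial>M)"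
    proof (rule Bochner_Integration.integral_mono[OF Pint])
      show "integrable M (\<lambda>\<omega>. \<Sum>k\<in>{1..Suc n}. u k \<omega> - v k \<omega>)" using iu by auto
      fix \<omega> assume w: "\<omega> \<in> space M"
      define D where "D k = X (tk T n k) \<omega> - Y (tk T n k) \<omega>" for k
      have "?P \<omega> = Phi (D (Suc n)) - Phi (D 0)"
        using goodD(1)[OF X w] goodD(1)[OF Y w] by (simp add: D_def tk_last Phi_def tk_def)
      also have "\<dots> = (\<Sum>k\<in>{1..Suc n}. Phi (D k) - Phi (D (k-1)))" by (rule tele[symmetric])
      also have "\<dots> \<le> (\<Sum>k\<in>{1..Suc n}. phi (D k) * (D k - D (k-1)))"
        by (intro sum_mono Phi_ineq)
      also have "\<dots> = (\<Sum>k\<in>{1..Suc n}. u k \<omega> - v k \<omega>)"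
        by (intro sum.cong refl) (simp add: u_def v_def c_def D_def algebra_simps)
      finally show "?P \<omega> \<le> (\<Sum>k\<in>{1..Suc n}. u k \<omega> - v k \<omega>)" .
    qed
    thus ?thesis using ab by simp
  qed
  have "(\<integral>\<omega>. ?P \<omega> \<partial>M) \<le> 0"
    using lim0 bound by (intro LIMSEQ_le_const[OF lim0]) auto
  moreover have "0 \<le> (\<integral>\<omega>. ?P \<omega> \<partial>M)" using Phi_nonneg by (intro Bochner_Integration.integral_nonneg) auto
  ultimately have "(\<integral>\<omega>. ?P \<omega> \<partial>M) = 0" by simp
  hence "AE \<omega> in M. ?P \<omega> = 0"
    using integral_nonneg_eq_0_iff_AE[OF Pint] Phi_nonneg by auto
  thus ?thesis by (rule eventually_mono) (auto dest: Phi_zero)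
qed

end

locale setting =
  fixes M :: "'a measure" and F :: "real \<Rightarrow> 'a set set" and \<tau> :: "'a \<Rightarrow> real"
  assumes prob: "prob_space M"
    and filt: "filtration_on M F"
    and taum[measurable]: "\<tau> \<in> borel_measurable M" and taupos: "\<forall>\<omega>\<in>space M. 0 < \<tau> \<omega>"
begin

lemma F_sa: "0 \<le> t \<Longrightarrow> sigma_algebra (space M) (F t)"
  using filt unfolding filtration_on_def by auto

lemma F_sub: "0 \<le> t \<Longrightarrow> F t \<subseteq> sets M"
  using filt unfolding filtration_on_def by auto

lemma F_mono: "0 \<le> s \<Longrightarrow> s \<le> t \<Longrightarrow> F s \<subseteq> F t"
  using filt unfolding filtration_on_def by auto

lemma tau_le_sets[measurable]: "{\<omega> \<in> space M. \<tau> \<omega> \<le> u} \<in> sets M"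
  by measurable

lemma Finf_sub: "F_infty M F \<subseteq> sets M"
  unfolding F_infty_def by (rule sets.sigma_sets_subset) (use F_sub in auto)

lemma Ginf_sub: "G_infty M F \<tau> \<subseteq> sets M"
  unfolding G_infty_def by (rule sets.sigma_sets_subset) (use Finf_sub in auto)

lemma Ginf_gen_Pow: "F_infty M F \<union> {{\<omega>\<in>space M. \<tau> \<omega> \<le> s} | s. True} \<subseteq> Pow (space M)"
  using Finf_sub sets.sets_into_space by auto

lemma Ginf_sa: "sigma_algebra (space M) (G_infty M F \<tau>)"
  unfolding G_infty_def by (rule sigma_algebra_sigma_sets[OF Ginf_gen_Pow])

lemma G_sa: assumes t: "0 \<le> t" shows "sigma_algebra (space M) (prog_exp M F \<tau> t)"
proof -
  interpret Fs: sigma_algebra "space M" "F t" using F_sa[OF t] .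
  interpret Gi: sigma_algebra "space M" "G_infty M F \<tau>" by (rule Ginf_sa)
  let ?S = "{\<omega>\<in>space M. t < \<tau> \<omega>}"
  show ?thesis unfolding sigma_algebra_iff2
  proof (intro conjI ballI allI impI)
    show "prog_exp M F \<tau> t \<subseteq> Pow (space M)"
      unfolding prog_exp_def using Gi.space_closed by auto
    show "{} \<in> prog_exp M F \<tau> t" unfolding prog_exp_def by auto
  next
    fix s assume "s \<in> prog_exp M F \<tau> t"
    then obtain Bt where s: "s \<in> G_infty M F \<tau>" "Bt \<in> F t" "s \<inter> ?S = Bt \<inter> ?S"
      unfolding prog_exp_def by blast
    have "(space M - s) \<inter> ?S = (space M - Bt) \<inter> ?S" using s(3) by blast
    thus "space M - s \<in> prog_exp M F \<tau> t" unfolding prog_exp_def using s by auto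
  next
    fix A :: "nat \<Rightarrow> 'a set" assume A: "range A \<subseteq> prog_exp M F \<tau> t"
    hence "\<forall>i. \<exists>Bt. A i \<in> G_infty M F \<tau> \<and> Bt \<in> F t \<and> A i \<inter> ?S = Bt \<inter> ?S"
      unfolding prog_exp_def by blast
    then obtain B where B: "\<And>i. A i \<in> G_infty M F \<tau>" "\<And>i. B i \<in> F t" "\<And>i. A i \<inter> ?S = B i \<inter> ?S"
      by metis
    have "(\<Union>i. A i) \<inter> ?S = (\<Union>i. B i) \<inter> ?S" using B(3) by blast
    moreover have "(\<Union>i. A i) \<in> G_infty M F \<tau>" using B(1) by auto
    moreover have "(\<Union>i. B i) \<in> F t" using B(2) by auto
    ultimately show "(\<Union>i. A i) \<in> prog_exp M F \<tau> t" unfolding prog_exp_def by blast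
  qed
qed

lemma F_G: assumes "0 \<le> t" shows "F t \<subseteq> prog_exp M F \<tau> t"
proof
  fix B assume B: "B \<in> F t"
  have "B \<in> F_infty M F" unfolding F_infty_def using B assms by (auto intro: sigma_sets.Basic)
  hence "B \<in> G_infty M F \<tau>" unfolding G_infty_def by (auto intro: sigma_sets.Basic)
  thus "B \<in> prog_exp M F \<tau> t" unfolding prog_exp_def using B by blast
qed

lemma Gp_gen_Pow: "F t \<union> {{\<omega>\<in>space M. \<tau> \<omega> \<le> s} | s. s \<le> t} \<subseteq> Pow (space M)" if "0 \<le> t"
  using F_sub[OF that] sets.sets_into_space by auto

lemma Gp_sa: "0 \<le> t \<Longrightarrow> sigma_algebra (space M) (min_exp M F \<tau> t)"
  unfolding min_exp_def by (rule sigma_algebra_sigma_sets[OF Gp_gen_Pow])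

lemma Gp_G: assumes t: "0 \<le> t" shows "min_exp M F \<tau> t \<subseteq> prog_exp M F \<tau> t"
  unfolding min_exp_def
proof (rule sigma_algebra.sigma_sets_subset[OF G_sa[OF t]])
  have "{\<omega>\<in>space M. \<tau> \<omega> \<le> s} \<in> prog_exp M F \<tau> t" if "s \<le> t" for s
  proof -
    have "{\<omega>\<in>space M. \<tau> \<omega> \<le> s} \<in> G_infty M F \<tau>" unfolding G_infty_def by (auto intro: sigma_sets.Basic)
    moreover have "{\<omega>\<in>space M. \<tau> \<omega> \<le> s} \<inter> {\<omega>\<in>space M. t < \<tau> \<omega>} = {} \<inter> {\<omega>\<in>space M. t < \<tau> \<omega>}"
      using that by auto
    moreover have "{} \<in> F t" using F_sa[OF t] by (simp add: sigma_algebra_iff2)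
    ultimately show ?thesis unfolding prog_exp_def by blast
  qed
  thus "F t \<union> {{\<omega>\<in>space M. \<tau> \<omega> \<le> s} | s. s \<le> t} \<subseteq> prog_exp M F \<tau> t"
    using F_G[OF t] by auto
qed

lemma G_sub: "0 \<le> t \<Longrightarrow> prog_exp M F \<tau> t \<subseteq> sets M"
  using Ginf_sub unfolding prog_exp_def by auto

lemma G_mono: assumes "0 \<le> s" "s \<le> t" shows "prog_exp M F \<tau> s \<subseteq> prog_exp M F \<tau> t"
proof
  fix B assume "B \<in> prog_exp M F \<tau> s"
  then obtain Bs where B: "B \<in> G_infty M F \<tau>" "Bs \<in> F s" "B \<inter> {\<omega>\<in>space M. s < \<tau> \<omega>} = Bs \<inter> {\<omega>\<in>space M. s < \<tau> \<omega>}"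
    unfolding prog_exp_def by blast
  have "B \<inter> {\<omega>\<in>space M. t < \<tau> \<omega>} = Bs \<inter> {\<omega>\<in>space M. t < \<tau> \<omega>}"
  proof -
    have "{\<omega>\<in>space M. t < \<tau> \<omega>} \<subseteq> {\<omega>\<in>space M. s < \<tau> \<omega>}" using assms by auto
    thus ?thesis using B(3) by blast
  qed
  moreover have "Bs \<in> F t" using F_mono[OF assms] B(2) by auto
  ultimately show "B \<in> prog_exp M F \<tau> t" unfolding prog_exp_def using B(1) by blast
qed

lemma Gp_sub: "0 \<le> t \<Longrightarrow> min_exp M F \<tau> t \<subseteq> sets M"
  using Gp_G G_sub by blast

lemma Gp_mono: assumes "0 \<le> s" "s \<le> t" shows "min_exp M F \<tau> s \<subseteq> min_exp M F \<tau> t"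
  unfolding min_exp_def using F_mono[OF assms] assms(2) by (intro sigma_sets_mono') auto

lemma pfilt_G: "pfilt M (prog_exp M F \<tau>)"
proof (rule pfilt.intro)
  show "prob_space M" by (rule prob)
  show "\<And>s. 0 \<le> s \<Longrightarrow> prog_exp M F \<tau> s \<subseteq> sets M" by (rule G_sub)
  show "\<And>s t. 0 \<le> s \<Longrightarrow> s \<le> t \<Longrightarrow> prog_exp M F \<tau> s \<subseteq> prog_exp M F \<tau> t" by (rule G_mono)
  show "\<And>s a b. 0 \<le> s \<Longrightarrow> a \<in> prog_exp M F \<tau> s \<Longrightarrow> b \<in> prog_exp M F \<tau> s \<Longrightarrow> a \<inter> b \<in> prog_exp M F \<tau> s"
  proof -
    fix s a b assume h: "0 \<le> s" "a \<in> prog_exp M F \<tau> s" "b \<in> prog_exp M F \<tau> s"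
    interpret sigma_algebra "space M" "prog_exp M F \<tau> s" using G_sa h(1) .
    show "a \<inter> b \<in> prog_exp M F \<tau> s" using h by auto
  qed
  show "\<And>s. 0 \<le> s \<Longrightarrow> space M \<in> prog_exp M F \<tau> s"
    using G_sa by (simp add: sigma_algebra_iff2) (metis Diff_empty)
  show "{} \<in> prog_exp M F \<tau> 0"
    using G_sa[of 0] by (simp add: sigma_algebra_iff2)
qed

lemma pfilt_Gp: "pfilt M (min_exp M F \<tau>)"
proof (rule pfilt.intro)
  show "prob_space M" by (rule prob)
  show "\<And>s. 0 \<le> s \<Longrightarrow> min_exp M F \<tau> s \<subseteq> sets M" by (rule Gp_sub)
  show "\<And>s t. 0 \<le> s \<Longrightarrow> s \<le> t \<Longrightarrow> min_exp M F \<tau> s \<subseteq> min_exp M F \<tau> t" by (rule Gp_mono)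
  show "\<And>s a b. 0 \<le> s \<Longrightarrow> a \<in> min_exp M F \<tau> s \<Longrightarrow> b \<in> min_exp M F \<tau> s \<Longrightarrow> a \<inter> b \<in> min_exp M F \<tau> s"
  proof -
    fix s a b assume h: "0 \<le> s" "a \<in> min_exp M F \<tau> s" "b \<in> min_exp M F \<tau> s"
    interpret sigma_algebra "space M" "min_exp M F \<tau> s" using Gp_sa h(1) .
    show "a \<inter> b \<in> min_exp M F \<tau> s" using h by auto
  qed
  show "\<And>s. 0 \<le> s \<Longrightarrow> space M \<in> min_exp M F \<tau> s"
    using Gp_sa by (simp add: sigma_algebra_iff2) (metis Diff_empty)
  show "{} \<in> min_exp M F \<tau> 0"
    using Gp_sa[of 0] by (simp add: sigma_algebra_iff2)
qed

end

context setting begin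

definition NN :: "real \<Rightarrow> 'a \<Rightarrow> real" where
  "NN t \<omega> = indicator {\<omega>'. \<tau> \<omega>' \<le> t} \<omega>"

lemma NN_alt: "NN t \<omega> = (if \<tau> \<omega> \<le> t then 1 else 0)"
  by (simp add: NN_def indicator_def)

lemma NN_meas[measurable]: "NN t \<in> borel_measurable M"
  unfolding NN_alt by measurable

lemma NN_int: "integrable M (NN t)"
proof -
  interpret prob_space M by (rule prob)
  show ?thesis by (rule integrable_const_bound[where B=1]) (auto simp: NN_alt)
qed

lemma NN_good: "good M NN"
  unfolding good_def
proof (intro conjI ballI allI impI)
  fix \<omega> assume w: "\<omega> \<in> space M"
  show "NN 0 \<omega> = 0" using taupos w by (auto simp: NN_alt)
  show "mono_on {0..} (\<lambda>t. NN t \<omega>)" by (rule mono_onI) (auto simp: NN_alt)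
  fix t :: real assume t: "0 \<le> t"
  show "continuous (at_right t) (\<lambda>s. NN s \<omega>)"
    unfolding continuous_within
  proof (rule tendsto_eventually)
    show "\<forall>\<^sub>F s in at_right t. NN s \<omega> = NN t \<omega>"
    proof (cases "\<tau> \<omega> \<le> t")
      case True
      thus ?thesis by (auto simp: NN_alt eventually_at_right_field intro!: exI[of _ "t+1"])
    next
      case False
      thus ?thesis by (auto simp: NN_alt eventually_at_right_field intro!: exI[of _ "\<tau> \<omega>"])
    qed
  qed
next
  fix t :: real assume "0 \<le> t" show "integrable M (NN t)" by (rule NN_int)
qed

lemma comp_good:
  assumes "compensator M H \<tau> A"
  shows "good M A"
proof -
  have m: "martingale M H (\<lambda>t \<omega>. indicator {\<omega>'. \<tau> \<omega>' \<le> t} \<omega> - A t \<omega>)"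
    using assms unfolding compensator_def by auto
  have i: "integrable M (\<lambda>\<omega>. NN t \<omega> - A t \<omega>)" if "0 \<le> t" for t
    using m that unfolding martingale_def NN_def by auto
  have "integrable M (A t)" if "0 \<le> t" for t
  proof -
    have "integrable M (\<lambda>\<omega>. NN t \<omega> - (NN t \<omega> - A t \<omega>))"
      using NN_int i[OF that] by (rule Bochner_Integration.integrable_diff)
    thus ?thesis by simp
  qed
  thus ?thesis using assms unfolding good_def compensator_def by auto
qed

lemma comp_cond:
  assumes c: "compensator M H \<tau> A" and Hs: "\<And>s. 0 \<le> s \<Longrightarrow> H s \<subseteq> sets M"
    and st: "0 \<le> s" "s \<le> t" and B: "B \<in> H s"
  shows "(\<integral>\<omega>. indicator B \<omega> * (A t \<omega> - A s \<omega>) \<partial>M) = (\<integral>\<omega>. indicator B \<omega> * (NN t \<omega> - NN s \<omega>) \<partial>M)"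
proof -
  have m: "martingale M H (\<lambda>t \<omega>. indicator {\<omega>'. \<tau> \<omega>' \<le> t} \<omega> - A t \<omega>)"
    using c unfolding compensator_def by auto
  have Bm: "B \<in> sets M" using Hs[OF st(1)] B by auto
  have eq: "(\<integral>\<omega>. indicator B \<omega> * (NN t \<omega> - A t \<omega>) \<partial>M) = (\<integral>\<omega>. indicator B \<omega> * (NN s \<omega> - A s \<omega>) \<partial>M)"
    using m st B unfolding martingale_def set_lebesgue_integral_def NN_def by auto
  have gA: "good M A" by (rule comp_good[OF c])
  have iA: "integrable M (\<lambda>\<omega>. indicator B \<omega> * A r \<omega>)" if "0 \<le> r" for r
    using integrable_mult_indicator[OF Bm goodD(4)[OF gA that]] by simp
  have iN: "integrable M (\<lambda>\<omega>. indicator B \<omega> * NN r \<omega>)" for r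
    using integrable_mult_indicator[OF Bm NN_int] by simp
  have "(\<integral>\<omega>. indicator B \<omega> * (A t \<omega> - A s \<omega>) \<partial>M) =
     (\<integral>\<omega>. indicator B \<omega> * A t \<omega> \<partial>M) - (\<integral>\<omega>. indicator B \<omega> * A s \<omega> \<partial>M)"
    using iA st by (subst Bochner_Integration.integral_diff[symmetric]) (auto simp: algebra_simps)
  moreover have "(\<integral>\<omega>. indicator B \<omega> * (NN t \<omega> - NN s \<omega>) \<partial>M) =
     (\<integral>\<omega>. indicator B \<omega> * NN t \<omega> \<partial>M) - (\<integral>\<omega>. indicator B \<omega> * NN s \<omega> \<partial>M)"
    using iN by (subst Bochner_Integration.integral_diff[symmetric]) (auto simp: algebra_simps)
  moreover have "(\<integral>\<omega>. indicator B \<omega> * (NN r \<omega> - A r \<omega>) \<partial>M) =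
     (\<integral>\<omega>. indicator B \<omega> * NN r \<omega> \<partial>M) - (\<integral>\<omega>. indicator B \<omega> * A r \<omega> \<partial>M)" if "0 \<le> r" for r
    using iN iA[OF that] by (subst Bochner_Integration.integral_diff[symmetric]) (auto simp: algebra_simps)
  ultimately show ?thesis using eq st order.trans[OF st] by simp
qed

lemma pred_mono:
  assumes sub: "\<And>s. 0 \<le> s \<Longrightarrow> H1 s \<subseteq> H2 s" and p: "predictable M H1 X"
  shows "predictable M H2 X"
proof -
  have "predictable_sets M H1 \<subseteq> predictable_sets M H2"
    unfolding predictable_sets_def
  proof (rule sigma_sets_mono')
    show "{A \<times> {0} |A. A \<in> H1 0} \<union> {A \<times> {s<..t} |A s t. 0 \<le> s \<and> s < t \<and> A \<in> H1 s}
      \<subseteq> {A \<times> {0} |A. A \<in> H2 0} \<union> {A \<times> {s<..t} |A s t. 0 \<le> s \<and> s < t \<and> A \<in> H2 s}"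
      using sub by blast
  qed
  thus ?thesis using p unfolding predictable_def by blast
qed

end

context setting begin

lemma tau_sets_Gp: "0 \<le> s \<Longrightarrow> q \<le> s \<Longrightarrow> {\<omega>\<in>space M. \<tau> \<omega> \<le> q} \<in> min_exp M F \<tau> s"
  unfolding min_exp_def by (rule sigma_sets.Basic) blast

lemma C_sets:
  "{x \<in> space M \<times> {0..}. \<tau> (fst x) < snd x} \<in> sets (PS M (min_exp M F \<tau>))"
proof -
  interpret Gp: pfilt M "min_exp M F \<tau>" by (rule pfilt_Gp)
  define Q where "Q n j = {\<omega>\<in>space M. \<tau> \<omega> \<le> real j / real (Suc n)} \<times> {real j / real (Suc n) <.. real (Suc j) / real (Suc n)}" for n j :: nat
  have [measurable]: "Q n j \<in> sets (PS M (min_exp M F \<tau>))" for n j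
    unfolding Q_def
    by (rule Gp.gen_in_PS, rule Gp.gensI) (auto intro: tau_sets_Gp simp: divide_strict_right_mono)
  have "{x \<in> space M \<times> {0..}. \<tau> (fst x) < snd x} = (\<Union>n. \<Union>j. Q n j)"
  proof (intro set_eqI iffI)
    fix x assume x: "x \<in> {x \<in> space M \<times> {0..}. \<tau> (fst x) < snd x}"
    obtain \<omega> r where xr: "x = (\<omega>, r)" by (cases x)
    have w: "\<omega> \<in> space M" and r: "0 \<le> r" "\<tau> \<omega> < r" using x xr by auto
    have tp: "0 < \<tau> \<omega>" using taupos w by auto
    obtain n where n: "inverse (real (Suc n)) < r - \<tau> \<omega>" using reals_Archimedean r by (metis diff_gt_0_iff_gt)
    define N where "N = real (Suc n)"
    have N: "0 < N" by (simp add: N_def)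
    have n': "1 / N < r - \<tau> \<omega>" using n by (simp add: N_def inverse_eq_divide)
    define j where "j = nat (\<lceil>r * N\<rceil> - 1)"
    have pos: "0 < r * N" using r tp N by simp
    have c1: "1 \<le> \<lceil>r * N\<rceil>" using pos by (simp add: one_le_ceiling)
    have jr: "real j = real_of_int \<lceil>r * N\<rceil> - 1" unfolding j_def using c1 by simp
    have a: "real j < r * N" using jr by linarith
    have b: "r * N \<le> real j + 1" using jr by linarith
    have "real j / N < r" using a N by (simp add: divide_less_eq)
    moreover have "r \<le> real (Suc j) / N" using b N by (simp add: pos_le_divide_eq)
    moreover have "\<tau> \<omega> \<le> real j / N"
    proof -
      have "r * N - 1 \<le> real j" using b by simp
      hence "(r * N - 1) / N \<le> real j / N" using N by (intro divide_right_mono) auto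
      moreover have "(r * N - 1) / N = r - 1 / N" using N by (simp add: diff_divide_distrib)
      ultimately have "r - 1 / N \<le> real j / N" by simp
      thus ?thesis using n' by linarith
    qed
    ultimately have "x \<in> Q n j" unfolding Q_def xr N_def using w by auto
    thus "x \<in> (\<Union>n. \<Union>j. Q n j)" by blast
  next
    fix x assume "x \<in> (\<Union>n. \<Union>j. Q n j)"
    then obtain n j where x: "x \<in> Q n j" by blast
    define q where "q = real j / real (Suc n)"
    have q0: "0 \<le> q" by (simp add: q_def)
    have "fst x \<in> space M" "\<tau> (fst x) \<le> q" "q < snd x" using x unfolding Q_def q_def by (auto simp: mem_Times_iff)
    thus "x \<in> {x \<in> space M \<times> {0..}. \<tau> (fst x) < snd x}" using q0 by (auto simp: mem_Times_iff)
  qed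
  also have "\<dots> \<in> sets (PS M (min_exp M F \<tau>))" by measurable
  finally show ?thesis .
qed

lemma stop_after_tau:
  assumes c': "compensator M (min_exp M F \<tau>) \<tau> A'" and st: "0 \<le> s" "s < t"
  shows "AE \<omega> in M. \<tau> \<omega> \<le> s \<longrightarrow> A' t \<omega> = A' s \<omega>"
proof -
  interpret Gp: pfilt M "min_exp M F \<tau>" by (rule pfilt_Gp)
  let ?H = "min_exp M F \<tau>"
  let ?C = "{x \<in> space M \<times> {0..}. \<tau> (fst x) < snd x}"
  have gA: "good M A'" by (rule comp_good[OF c'])
  have T: "0 < t" using st by simp
  have nueq: "nu M ?H A' t = nu M ?H NN t"
    by (rule Gp.nu_eq[OF gA NN_good T]) (rule comp_cond[OF c' Gp_sub])
  have C: "?C \<in> sets (PS M ?H)" by (rule C_sets)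
  have zero: "emeasure (nu M ?H NN t) ?C = 0"
  proof -
    have "RR M NN t \<inter> (psi NN t -` ?C \<inter> space (M \<Otimes>\<^sub>M lborel)) = {}"
    proof (rule ccontr)
      assume "RR M NN t \<inter> (psi NN t -` ?C \<inter> space (M \<Otimes>\<^sub>M lborel)) \<noteq> {}"
      from this[unfolded ex_in_conv[symmetric]]
      obtain x where "x \<in> RR M NN t \<inter> (psi NN t -` ?C \<inter> space (M \<Otimes>\<^sub>M lborel))" ..
      hence x: "x \<in> RR M NN t" "psi NN t x \<in> ?C" by simp_all
      have w: "fst x \<in> space M" and u: "0 < snd x" "snd x \<le> NN t (fst x)"
        using x(1) by (auto simp: RR_def space_pair_measure)
      have u1: "snd x \<le> 1" using u(2) unfolding NN_alt by (cases "\<tau> (fst x) \<le> t") auto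
      have tp: "0 < \<tau> (fst x)" using taupos w by auto
      have e: "rho (\<lambda>s. NN s (fst x)) t (snd x) \<le> \<tau> (fst x) \<longleftrightarrow>
          (t \<le> \<tau> (fst x) \<or> (0 \<le> \<tau> (fst x) \<and> snd x \<le> NN (\<tau> (fst x)) (fst x)))"
        by (rule good_rho_le[OF NN_good w less_imp_le[OF T]])
      have n1: "NN (\<tau> (fst x)) (fst x) = 1" unfolding NN_alt by simp
      have "rho (\<lambda>s. NN s (fst x)) t (snd x) \<le> \<tau> (fst x)"
        using e n1 u1 tp by simp
      thus False using x(2) by (simp add: psi_def)
    qed
    thus ?thesis by (simp add: Gp.emeasure_nu[OF NN_good T C])
  qed
  define P where "P = {\<omega>\<in>space M. \<tau> \<omega> \<le> s}"
  have [measurable]: "P \<in> sets M" "A' s \<in> borel_measurable M" "A' t \<in> borel_measurable M"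
    unfolding P_def using goodD(5)[OF gA] st by auto
  let ?band = "{x \<in> space (M \<Otimes>\<^sub>M lborel). fst x \<in> P \<and> A' s (fst x) < snd x \<and> snd x \<le> A' t (fst x)}"
  have "emeasure (M \<Otimes>\<^sub>M lborel) ?band \<le> emeasure (M \<Otimes>\<^sub>M lborel) (RR M A' t \<inter> (psi A' t -` ?C \<inter> space (M \<Otimes>\<^sub>M lborel)))"
  proof (rule emeasure_mono)
    show "RR M A' t \<inter> (psi A' t -` ?C \<inter> space (M \<Otimes>\<^sub>M lborel)) \<in> sets (M \<Otimes>\<^sub>M lborel)"
      using Gp.RR_sets[OF gA less_imp_le[OF T]] measurable_sets[OF Gp.psi_meas[OF gA T] C] by auto
    show "?band \<subseteq> RR M A' t \<inter> (psi A' t -` ?C \<inter> space (M \<Otimes>\<^sub>M lborel))"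
    proof
      fix x assume x: "x \<in> ?band"
      have w: "fst x \<in> space M" using x by (auto simp: space_pair_measure)
      have "0 \<le> A' s (fst x)" using good_nonneg[OF gA w st(1)] .
      hence "x \<in> RR M A' t" using x by (auto simp: RR_def)
      moreover have "\<not> rho (\<lambda>r. A' r (fst x)) t (snd x) \<le> s"
        using good_rho_le[OF gA w less_imp_le[OF T]] x st by auto
      moreover have "0 \<le> rho (\<lambda>r. A' r (fst x)) t (snd x)"
        using good_rho_nonneg[OF gA w less_imp_le[OF T]] .
      ultimately show "x \<in> RR M A' t \<inter> (psi A' t -` ?C \<inter> space (M \<Otimes>\<^sub>M lborel))"
        using x w by (auto simp: psi_def P_def)
    qed
  qed
  also have "\<dots> = emeasure (nu M ?H A' t) ?C" by (rule Gp.emeasure_nu[OF gA T C, symmetric])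
  also have "\<dots> = 0" using zero nueq by simp
  finally have "emeasure (M \<Otimes>\<^sub>M lborel) ?band = 0" by simp
  moreover have "emeasure (M \<Otimes>\<^sub>M lborel) ?band = (\<integral>\<^sup>+\<omega>. indicator P \<omega> * ennreal (A' t \<omega> - A' s \<omega>) \<partial>M)"
    by (rule emeasure_band) (use good_mono[OF gA _ st(1)] st in auto)
  ultimately have "(\<integral>\<^sup>+\<omega>. indicator P \<omega> * ennreal (A' t \<omega> - A' s \<omega>) \<partial>M) = 0" by simp
  moreover have meas: "(\<lambda>\<omega>. indicator P \<omega> * ennreal (A' t \<omega> - A' s \<omega>)) \<in> borel_measurable M"
    by measurable
  ultimately have "AE \<omega> in M. indicator P \<omega> * ennreal (A' t \<omega> - A' s \<omega>) = 0"
    using nn_integral_0_iff_AE[OF meas] by simp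
  thus ?thesis
  proof (rule AE_mp[OF _ AE_I2], intro impI)
    fix \<omega> assume w: "\<omega> \<in> space M" and h: "indicator P \<omega> * ennreal (A' t \<omega> - A' s \<omega>) = 0" and ts: "\<tau> \<omega> \<le> s"
    have "\<omega> \<in> P" using w ts by (simp add: P_def)
    hence "A' t \<omega> - A' s \<omega> \<le> 0" using h by (simp add: ennreal_eq_0_iff)
    moreover have "A' s \<omega> \<le> A' t \<omega>" using good_mono[OF gA w st(1)] st by simp
    ultimately show "A' t \<omega> = A' s \<omega>" by simp
  qed
qed

end

context setting begin

lemma cond_G:
  assumes c': "compensator M (min_exp M F \<tau>) \<tau> A'" and st: "0 \<le> s" "s \<le> t"
    and B: "B \<in> prog_exp M F \<tau> s"
  shows "(\<integral>\<omega>. indicator B \<omega> * (A' t \<omega> - A' s \<omega>) \<partial>M) = (\<integral>\<omega>. indicator B \<omega> * (NN t \<omega> - NN s \<omega>) \<partial>M)"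
proof -
  let ?S = "{\<omega>\<in>space M. s < \<tau> \<omega>}"
  have Binf: "B \<in> G_infty M F \<tau>" and "\<exists>Bt\<in>F s. B \<inter> ?S = Bt \<inter> ?S"
    using B unfolding prog_exp_def by simp_all
  then obtain Bs where Bs: "Bs \<in> F s" "B \<inter> ?S = Bs \<inter> ?S" by blast
  have gA: "good M A'" by (rule comp_good[OF c'])
  have Bm: "B \<in> sets M" using G_sub[OF st(1)] B by auto
  hence Bsp: "B \<subseteq> space M" using sets.sets_into_space by auto
  define B1 where "B1 = Bs \<inter> ?S"
  have B1: "B1 \<in> min_exp M F \<tau> s"
  proof -
    interpret sa: sigma_algebra "space M" "min_exp M F \<tau> s" by (rule Gp_sa[OF st(1)])
    have "Bs \<in> min_exp M F \<tau> s" unfolding min_exp_def using Bs(1) by (auto intro: sigma_sets.Basic)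
    moreover have "space M - {\<omega>\<in>space M. \<tau> \<omega> \<le> s} \<in> min_exp M F \<tau> s"
      using tau_sets_Gp[OF st(1) order_refl] by auto
    moreover have "space M - {\<omega>\<in>space M. \<tau> \<omega> \<le> s} = ?S" by auto
    ultimately show ?thesis unfolding B1_def by (metis sa.Int)
  qed
  have B1m[measurable]: "B1 \<in> sets M" using Gp_sub[OF st(1)] B1 by auto
  note Bm[measurable]
  have ind: "\<omega> \<in> space M \<Longrightarrow> s < \<tau> \<omega> \<Longrightarrow> indicator B \<omega> = (indicator B1 \<omega> :: real)" for \<omega>
    using Bs(2) unfolding B1_def by (auto simp: indicator_def)
  have ind0: "\<omega> \<in> space M \<Longrightarrow> \<tau> \<omega> \<le> s \<Longrightarrow> (indicator B1 \<omega> :: real) = 0" for \<omega>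
    unfolding B1_def by auto
  have [measurable]: "A' s \<in> borel_measurable M" "A' t \<in> borel_measurable M"
    using goodD(5)[OF gA] st by auto
  have ae: "AE \<omega> in M. \<tau> \<omega> \<le> s \<longrightarrow> A' t \<omega> = A' s \<omega>"
  proof (cases "s = t")
    case True thus ?thesis by simp
  next
    case False thus ?thesis using stop_after_tau[OF c' st(1)] st by simp
  qed
  have "(\<integral>\<omega>. indicator B \<omega> * (A' t \<omega> - A' s \<omega>) \<partial>M) = (\<integral>\<omega>. indicator B1 \<omega> * (A' t \<omega> - A' s \<omega>) \<partial>M)"
  proof -
    have ae2: "AE \<omega> in M. indicator B \<omega> * (A' t \<omega> - A' s \<omega>) = indicator B1 \<omega> * (A' t \<omega> - A' s \<omega>)"
      using ae
    proof (rule AE_mp[OF _ AE_I2], intro impI)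
      fix \<omega> assume w: "\<omega> \<in> space M" and h: "\<tau> \<omega> \<le> s \<longrightarrow> A' t \<omega> = A' s \<omega>"
      show "indicator B \<omega> * (A' t \<omega> - A' s \<omega>) = indicator B1 \<omega> * (A' t \<omega> - A' s \<omega>)"
      proof (cases "\<tau> \<omega> \<le> s")
        case True thus ?thesis using h ind0[OF w] by simp
      next
        case False thus ?thesis using ind[OF w] by simp
      qed
    qed
    have m1: "(\<lambda>\<omega>. indicator B \<omega> * (A' t \<omega> - A' s \<omega>)) \<in> borel_measurable M"
      using Bm by (intro borel_measurable_times borel_measurable_indicator borel_measurable_diff) auto
    have m2: "(\<lambda>\<omega>. indicator B1 \<omega> * (A' t \<omega> - A' s \<omega>)) \<in> borel_measurable M"
      using B1m by (intro borel_measurable_times borel_measurable_indicator borel_measurable_diff) auto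
    show ?thesis by (rule integral_cong_AE[OF m1 m2 ae2])
  qed
  also have "\<dots> = (\<integral>\<omega>. indicator B1 \<omega> * (NN t \<omega> - NN s \<omega>) \<partial>M)"
    by (rule comp_cond[OF c' Gp_sub st B1])
  also have "\<dots> = (\<integral>\<omega>. indicator B \<omega> * (NN t \<omega> - NN s \<omega>) \<partial>M)"
  proof (rule Bochner_Integration.integral_cong[OF refl])
    fix \<omega> assume w: "\<omega> \<in> space M"
    show "indicator B1 \<omega> * (NN t \<omega> - NN s \<omega>) = indicator B \<omega> * (NN t \<omega> - NN s \<omega>)"
    proof (cases "\<tau> \<omega> \<le> s")
      case True thus ?thesis using st by (simp add: NN_alt)
    next
      case False thus ?thesis using ind[OF w] by simp
    qed
  qed
  finally show ?thesis .
qed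

lemma main:
  assumes c: "compensator M (prog_exp M F \<tau>) \<tau> A" and c': "compensator M (min_exp M F \<tau>) \<tau> A'"
  shows "AE \<omega> in M. \<forall>t\<ge>0. A t \<omega> = A' t \<omega>"
proof -
  interpret G: pfilt M "prog_exp M F \<tau>" by (rule pfilt_G)
  have gA: "good M A" by (rule comp_good[OF c])
  have gA': "good M A'" by (rule comp_good[OF c'])
  have pA: "predictable M (prog_exp M F \<tau>) A" using c unfolding compensator_def by auto
  have pA'0: "predictable M (min_exp M F \<tau>) A'" using c' unfolding compensator_def by blast
  have pA': "predictable M (prog_exp M F \<tau>) A'" by (rule pred_mono[OF Gp_G pA'0])
  have eqT: "AE \<omega> in M. A T \<omega> = A' T \<omega>" if T: "0 \<le> T" for T
  proof (cases "T = 0")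
    case True thus ?thesis using goodD(1)[OF gA] goodD(1)[OF gA'] by (intro AE_I2) simp
  next
    case False
    hence T: "0 < T" using T by simp
    have "nu M (prog_exp M F \<tau>) A T = nu M (prog_exp M F \<tau>) NN T"
      by (rule G.nu_eq[OF gA NN_good T]) (rule comp_cond[OF c G_sub])
    moreover have "nu M (prog_exp M F \<tau>) A' T = nu M (prog_exp M F \<tau>) NN T"
      by (rule G.nu_eq[OF gA' NN_good T]) (rule cond_G[OF c'])
    ultimately show ?thesis by (intro G.uniq[OF gA gA' T _ pA pA']) simp
  qed
  let ?Q = "{q \<in> \<rat>. 0 \<le> q}"
  have cQ: "countable ?Q" by (rule countable_subset[OF _ countable_rat]) auto
  have "AE \<omega> in M. \<forall>q\<in>?Q. A q \<omega> = A' q \<omega>"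
    by (rule AE_ball_countable'[OF _ cQ]) (use eqT in auto)
  thus ?thesis
  proof (rule AE_mp[OF _ AE_I2], intro impI allI)
    fix \<omega> and t :: real assume w: "\<omega> \<in> space M" and h: "\<forall>q\<in>?Q. A q \<omega> = A' q \<omega>" and t: "0 \<le> t"
    have "\<forall>n. \<exists>q. q \<in> \<rat> \<and> t < q \<and> q < t + 1 / real (Suc n)"
    proof
      fix n
      have "\<exists>q\<in>\<rat>. t < q \<and> q < t + 1 / real (Suc n)" by (rule Rats_dense_in_real) simp
      thus "\<exists>q. q \<in> \<rat> \<and> t < q \<and> q < t + 1 / real (Suc n)" by blast
    qed
    from choice[OF this] obtain a where a0: "\<forall>n. a n \<in> \<rat> \<and> t < a n \<and> a n < t + 1 / real (Suc n)"
      by blast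
    have a: "\<And>n. a n \<in> \<rat>" "\<And>n. t < a n" "\<And>n. a n < t + 1 / real (Suc n)"
      using a0 by auto
    have l1: "(\<lambda>n. A (a n) \<omega>) \<longlonglongrightarrow> A t \<omega>"
      by (rule rc_seq[where g="\<lambda>s. A s \<omega>", OF _ less_imp_le[OF a(2)] a(3)]) (use goodD(3)[OF gA w] t in auto)
    have l2: "(\<lambda>n. A' (a n) \<omega>) \<longlonglongrightarrow> A' t \<omega>"
      by (rule rc_seq[where g="\<lambda>s. A' s \<omega>", OF _ less_imp_le[OF a(2)] a(3)]) (use goodD(3)[OF gA' w] t in auto)
    have "A (a n) \<omega> = A' (a n) \<omega>" for n
    proof -
      have "a n \<in> ?Q" using a(1)[of n] a(2)[of n] t by simp
      thus ?thesis using h by blast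
    qed
    hence "(\<lambda>n. A (a n) \<omega>) = (\<lambda>n. A' (a n) \<omega>)" by (rule ext)
    hence l1': "(\<lambda>n. A' (a n) \<omega>) \<longlonglongrightarrow> A t \<omega>" using l1 by simp
    show "A t \<omega> = A' t \<omega>" by (rule LIMSEQ_unique[OF l1' l2])
  qed
qed

end

theorem corollary1p1:
  fixes M :: "'a measure" and F :: "real \<Rightarrow> 'a set set" and \<tau> :: "'a \<Rightarrow> real"
    and A A' :: "real \<Rightarrow> 'a \<Rightarrow> real"
  assumes "prob_space M" and "complete_measure M"
    and "filtration_on M F" and "usual_hypotheses M F"
    and "\<tau> \<in> borel_measurable M" and "\<forall>\<omega>\<in>space M. 0 < \<tau> \<omega>"
    and "compensator M (prog_exp M F \<tau>) \<tau> A"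
    and "compensator M (min_exp M F \<tau>) \<tau> A'"
  shows "AE \<omega> in M. \<forall>t\<ge>0. A t \<omega> = A' t \<omega>"
proof -
  have "setting M F \<tau>" using assms unfolding setting_def by blast
  then interpret setting M F \<tau> .
  show ?thesis by (rule main) (use assms in auto)
qed


end
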